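(* Let $K\subset\mathbb{R}^n$ be a closed set whose complement $K^c$ is a bounded open set, and let $\alpha,\lambda_{\max}>0$, $\mu\in(0,1]$ with $r_\mu^\alpha(K)>\alpha+\lambda_{\max}$. Let $R_{\max}=R_{\max}(K)<\infty$ and $\tilde\mu=\tilde\mu_{\mu,\lambda_{\max}}^{\alpha,\alpha}(K)>0$. Then for any $\lambda_{\min}\in(0,\lambda_{\max}]$, the map $\lambda\mapsto\mathrm{ax}_\lambda^\alpha(K)$ is $\frac{R_{\max}^2}{\alpha\lambda_{\min}\tilde\mu^2}$-Lipschitz on $[\lambda_{\min},\lambda_{\max}]$ with respect to the Hausdorff distance, i.e. $d_H(\mathrm{ax}_{\lambda_1}^\alpha(K),\mathrm{ax}_{\lambda_2}^\alpha(K))\le\frac{R_{\max}^2}{\alpha\lambda_{\min}\tilde\mu^2}|\lambda_1-\lambda_2|$ for $\lambda_1,\lambda_2\in[\lambda_{\min},\lambda_{\max}]$.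
   Context: For a closed set $K\subset\mathbb{R}^n$ with bounded open complement: $R_K(x)=d(x,K)$; $\Theta_K(x)=\{y\in K:\|x-y\|=R_K(x)\}$; for bounded $S$, $\mathrm{center}(S)$ and $\mathrm{radius}(S)$ are the center and radius of the smallest ball enclosing $S$; $\mathcal F_K(x)=\mathrm{radius}(\Theta_K(x))$; for $x\notin K$, $\nabla_K(x)=(x-\mathrm{center}(\Theta_K(x)))/R_K(x)$. $R_{\max}(K)=\max_{x\in K^c}R_K(x)$. Critical function: $\chi_K(t)=\inf\{\|\nabla_K(x)\|:R_K(x)=t\}$ for $t\in(0,R_{\max}(K)]$ (infimum of empty set $=1$). $K^{\oplus\alpha}=\{x:d(x,K)\le\alpha\}$. For $\mu\in(0,1]$, $\alpha\ge0$: $r_\mu^\alpha(K)=\inf\{t>\alpha:\chi_K(t)<\mu\}$. $\mathrm{ax}_\lambda^\alpha(K)=\{x:\mathcal F_{K^{\oplus\alpha}}(x)\ge\lambda\}$. $\tilde\mu_{\mu,\lambda}^{\alpha,\alpha'}(K)=\min\big(\mu,\sqrt{1-(\lambda/(r_\mu^{\alpha'}(K)-\alpha))^2}\big)$. $d_H$ is the Hausdorff distance. *)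

theory Defs
  imports "HOL-Analysis.Analysis"
begin

definition enc_radius :: "'a::euclidean_space set \<Rightarrow> real" where
  "enc_radius S = Inf {r. \<exists>c. S \<subseteq> cball c r}"

definition enc_center :: "'a::euclidean_space set \<Rightarrow> 'a" where
  "enc_center S = (SOME c. S \<subseteq> cball c (enc_radius S))"

definition RK :: "'a::euclidean_space set \<Rightarrow> 'a \<Rightarrow> real" where
  "RK K x = infdist x K"

definition ThetaK :: "'a::euclidean_space set \<Rightarrow> 'a \<Rightarrow> 'a set" where
  "ThetaK K x = {y \<in> K. dist x y = RK K x}"

definition FK :: "'a::euclidean_space set \<Rightarrow> 'a \<Rightarrow> real" where
  "FK K x = enc_radius (ThetaK K x)"

definition gradK :: "'a::euclidean_space set \<Rightarrow> 'a \<Rightarrow> 'a" where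
  "gradK K x = (1 / RK K x) *\<^sub>R (x - enc_center (ThetaK K x))"

definition Rmax :: "'a::euclidean_space set \<Rightarrow> real" where
  "Rmax K = Sup (RK K ` (- K))"

definition chiK :: "'a::euclidean_space set \<Rightarrow> real \<Rightarrow> real" where
  "chiK K t = (if {x. RK K x = t} = {} then 1
               else Inf {norm (gradK K x) | x. RK K x = t})"

definition offset :: "'a::euclidean_space set \<Rightarrow> real \<Rightarrow> 'a set" where
  "offset K \<alpha> = {x. infdist x K \<le> \<alpha>}"

text \<open>r_mu^alpha(K), extended-real valued (inf of empty set = infinity).\<close>
definition r_mu :: "real \<Rightarrow> real \<Rightarrow> 'a::euclidean_space set \<Rightarrow> ereal" where
  "r_mu \<mu> \<alpha> K = Inf {ereal t | t. t > \<alpha> \<and> chiK K t < \<mu>}"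

definition axl :: "real \<Rightarrow> real \<Rightarrow> 'a::euclidean_space set \<Rightarrow> 'a set" where
  "axl lam \<alpha> K = {x. FK (offset K \<alpha>) x \<ge> lam}"

text \<open>tilde mu; when r = infinity, lambda/(r - alpha) = 0 and the min is mu.\<close>
definition tilde_mu :: "real \<Rightarrow> real \<Rightarrow> real \<Rightarrow> real \<Rightarrow> 'a::euclidean_space set \<Rightarrow> real" where
  "tilde_mu \<mu> lam \<alpha> \<alpha>' K =
     (if r_mu \<mu> \<alpha>' K = \<infinity> then \<mu>
      else min \<mu> (sqrt (1 - (lam / (real_of_ereal (r_mu \<mu> \<alpha>' K) - \<alpha>))\<^sup>2)))"

definition dH :: "'a::metric_space set \<Rightarrow> 'a set \<Rightarrow> ereal" where
  "dH A B = (if A = {} \<and> B = {} then 0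
             else if A = {} \<or> B = {} then \<infinity>
             else max (SUP x\<in>A. ereal (infdist x B)) (SUP y\<in>B. ereal (infdist y A)))"

end

theory Submission
  imports Defs
begin

lemma nearest_exists:
  fixes A :: "'a::euclidean_space set"
  assumes "closed A" "A \<noteq> {}"
  shows "\<exists>a\<in>A. infdist x A = dist x a"
proof -
  obtain a where a: "a \<in> A" "\<And>y. y \<in> A \<Longrightarrow> dist x a \<le> dist x y"
    using distance_attains_inf[OF assms] by blast
  have "infdist x A = dist x a"
    unfolding infdist_def using assms(2) a
    by (auto intro!: cInf_eq_minimum)
  with a show ?thesis by blast
qed

lemma infdist_le_dist: "a \<in> A \<Longrightarrow> infdist x A \<le> dist x a"
  by (rule infdist_le)

lemma Theta_alt: "ThetaK K x = {y \<in> K. dist x y = infdist x K}"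
  by (simp add: ThetaK_def RK_def)

lemma Theta_ne:
  fixes K :: "'a::euclidean_space set"
  assumes "closed K" "K \<noteq> {}"
  shows "ThetaK K x \<noteq> {}"
  using nearest_exists[OF assms, of x] by (auto simp: Theta_alt)

lemma Theta_compact:
  fixes K :: "'a::euclidean_space set"
  assumes "closed K"
  shows "compact (ThetaK K x)"
proof -
  have "ThetaK K x = K \<inter> sphere x (infdist x K)"
    by (auto simp: Theta_alt)
  thus ?thesis using assms by (simp add: compact_Int_closed closed_Int_compact)
qed

lemma var_identity:
  fixes p b :: "'a::euclidean_space"
  assumes "finite Y" "sum u Y = 1" "b = (\<Sum>y\<in>Y. u y *\<^sub>R y)"
  shows "(\<Sum>y\<in>Y. u y * (norm (y - p))\<^sup>2) = (\<Sum>y\<in>Y. u y * (norm (y - b))\<^sup>2) + (norm (b - p))\<^sup>2"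
proof -
  have e: "(norm (y - p))\<^sup>2 = (norm (y - b))\<^sup>2 + 2 * inner (y - b) (b - p) + (norm (b - p))\<^sup>2" for y
    using dot_norm[of "y - b" "b - p"] by simp
  have z: "(\<Sum>y\<in>Y. u y * inner (y - b) (b - p)) = 0"
  proof -
    have "(\<Sum>y\<in>Y. u y * inner (y - b) (b - p)) = inner (\<Sum>y\<in>Y. u y *\<^sub>R (y - b)) (b - p)"
      by (simp add: inner_sum_left)
    also have "(\<Sum>y\<in>Y. u y *\<^sub>R (y - b)) = (\<Sum>y\<in>Y. u y *\<^sub>R y) - (\<Sum>y\<in>Y. u y) *\<^sub>R b"
      by (simp add: scaleR_diff_right sum_subtractf scaleR_sum_left)
    also have "\<dots> = 0" using assms by simp
    finally show ?thesis by simp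
  qed
  have "(\<Sum>y\<in>Y. u y * (norm (y - p))\<^sup>2) = (\<Sum>y\<in>Y. u y * (norm (y - b))\<^sup>2) + 2 * (\<Sum>y\<in>Y. u y * inner (y - b) (b - p)) + (\<Sum>y\<in>Y. u y) * (norm (b - p))\<^sup>2"
  proof -
    have "(\<Sum>y\<in>Y. u y * (norm (y - p))\<^sup>2) = (\<Sum>y\<in>Y. u y * (norm (y - b))\<^sup>2 + 2 * (u y * inner (y - b) (b - p)) + u y * (norm (b - p))\<^sup>2)"
    proof (rule sum.cong[OF refl])
      fix y assume "y \<in> Y"
      show "u y * (norm (y - p))\<^sup>2 = u y * (norm (y - b))\<^sup>2 + 2 * (u y * inner (y - b) (b - p)) + u y * (norm (b - p))\<^sup>2"
        unfolding e[of y] by (simp add: algebra_simps)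
    qed
    also have "\<dots> = (\<Sum>y\<in>Y. u y * (norm (y - b))\<^sup>2) + (\<Sum>y\<in>Y. 2 * (u y * inner (y - b) (b - p))) + (\<Sum>y\<in>Y. u y * (norm (b - p))\<^sup>2)"
      by (simp add: sum.distrib)
    also have "\<dots> = (\<Sum>y\<in>Y. u y * (norm (y - b))\<^sup>2) + 2 * (\<Sum>y\<in>Y. u y * inner (y - b) (b - p)) + (\<Sum>y\<in>Y. u y) * (norm (b - p))\<^sup>2"
      by (simp add: sum_distrib_left sum_distrib_right)
    finally show ?thesis .
  qed
  thus ?thesis using z assms by simp
qed

lemma enc_set_bdd:
  assumes "S \<noteq> {}"
  shows "bdd_below {r. \<exists>c. S \<subseteq> cball c r}"
proof -
  obtain y where "y \<in> S" using assms by blast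
  thus ?thesis unfolding bdd_below_def
    by (intro exI[of _ 0]) (auto intro: order_trans[OF zero_le_dist] simp: subset_iff)
qed

lemma enc_le:
  assumes "S \<noteq> {}" "S \<subseteq> cball c r"
  shows "enc_radius S \<le> r"
  unfolding enc_radius_def using assms enc_set_bdd[OF assms(1)]
  by (intro cInf_lower) auto

lemma enc_ge:
  assumes "bounded S" "\<And>c r. S \<subseteq> cball c r \<Longrightarrow> m \<le> r"
  shows "m \<le> enc_radius S"
proof -
  obtain c r where "S \<subseteq> cball c r" using assms(1) bounded_subset_cball by blast
  thus ?thesis unfolding enc_radius_def using assms(2)
    by (intro cInf_greatest) auto
qed

lemma enc_nonneg:
  assumes "bounded S" "S \<noteq> {}"
  shows "0 \<le> enc_radius S"
  using assms by (intro enc_ge) (auto simp: subset_iff intro: order_trans[OF zero_le_dist])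

lemma enc_var:
  fixes S :: "'a::euclidean_space set"
  assumes "bounded S" "finite Y" "Y \<subseteq> S" "\<And>y. y \<in> Y \<Longrightarrow> 0 \<le> u y" "sum u Y = 1"
    "b = (\<Sum>y\<in>Y. u y *\<^sub>R y)"
  shows "(\<Sum>y\<in>Y. u y * (norm (y - b))\<^sup>2) \<le> (enc_radius S)\<^sup>2"
proof -
  let ?V = "(\<Sum>y\<in>Y. u y * (norm (y - b))\<^sup>2)"
  have V0: "0 \<le> ?V" using assms(4) by (intro sum_nonneg) auto
  have "sqrt ?V \<le> enc_radius S"
  proof (rule enc_ge[OF assms(1)])
    fix c r assume sub: "S \<subseteq> cball c r"
    have "Y \<noteq> {}" using assms(5) by auto
    then obtain y0 where "y0 \<in> Y" by blast
    hence r0: "0 \<le> r" using sub assms(3) by (auto simp: subset_iff intro: order_trans[OF zero_le_dist])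
    have "?V \<le> (\<Sum>y\<in>Y. u y * (norm (y - c))\<^sup>2)"
      using var_identity[OF assms(2,5,6), of c] by simp
    also have "\<dots> \<le> (\<Sum>y\<in>Y. u y * r\<^sup>2)"
    proof (rule sum_mono)
      fix y assume "y \<in> Y"
      hence "norm (y - c) \<le> r" using sub assms(3) by (auto simp: dist_norm norm_minus_commute subset_iff)
      hence "(norm (y - c))\<^sup>2 \<le> r\<^sup>2" by (simp add: power_mono)
      thus "u y * (norm (y - c))\<^sup>2 \<le> u y * r\<^sup>2" using assms(4)[OF \<open>y \<in> Y\<close>] by (simp add: mult_left_mono)
    qed
    also have "\<dots> = r\<^sup>2" using assms(5) by (simp add: sum_distrib_right[symmetric])
    finally have "?V \<le> r\<^sup>2" .
    hence "sqrt ?V \<le> sqrt (r\<^sup>2)" by (rule real_sqrt_le_mono)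
    thus "sqrt ?V \<le> r" using r0 by simp
  qed
  moreover have "0 \<le> sqrt ?V" using V0 by simp
  ultimately have "(sqrt ?V)\<^sup>2 \<le> (enc_radius S)\<^sup>2" by (metis power_mono)
  thus ?thesis using V0 by simp
qed

lemma enc_exists:
  fixes S :: "'a::euclidean_space set"
  assumes "bounded S" "S \<noteq> {}"
  shows "\<exists>c. S \<subseteq> cball c (enc_radius S)"
proof -
  obtain y0 where y0: "y0 \<in> S" using assms(2) by blast
  obtain r1 where "\<forall>y\<in>S. dist y0 y \<le> r1" using bounded_any_center[of S y0] assms(1) by blast
  hence r1: "S \<subseteq> cball y0 r1" by auto
  define P where "P = {p::'a \<times> real. S \<subseteq> cball (fst p) (snd p) \<and> snd p \<le> r1}"
  have P_eq: "P = (\<Inter>y\<in>S. {p. dist (fst p) y \<le> snd p}) \<inter> {p. snd p \<le> r1}"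
    unfolding P_def by (auto simp: subset_iff)
  have "closed P" unfolding P_eq
    by (intro closed_Int closed_INT ballI closed_Collect_le continuous_intros)
  moreover have "bounded P"
  proof -
    have "P \<subseteq> cball y0 r1 \<times> cball 0 r1"
    proof
      fix p assume "p \<in> P"
      hence p: "S \<subseteq> cball (fst p) (snd p)" "snd p \<le> r1" by (auto simp: P_def)
      hence "dist (fst p) y0 \<le> snd p" using y0 by auto
      moreover have "0 \<le> snd p" using \<open>dist (fst p) y0 \<le> snd p\<close> zero_le_dist order_trans by blast
      ultimately show "p \<in> cball y0 r1 \<times> cball 0 r1" using p
        by (cases p) (auto simp: dist_commute)
    qed
    thus ?thesis by (rule bounded_subset[OF bounded_Times[OF bounded_cball bounded_cball]])
  qed
  ultimately have "compact P" by (simp add: compact_eq_bounded_closed)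
  moreover have "(y0, r1) \<in> P" using r1 by (simp add: P_def)
  moreover have "continuous_on P snd" by (rule continuous_on_snd[OF continuous_on_id])
  ultimately obtain p0 where p0: "p0 \<in> P" "\<And>p. p \<in> P \<Longrightarrow> snd p0 \<le> snd p"
    using continuous_attains_inf[of P snd] by blast
  have "enc_radius S = snd p0"
  proof (rule antisym)
    show "enc_radius S \<le> snd p0" using p0(1) assms(2) by (intro enc_le) (auto simp: P_def)
    show "snd p0 \<le> enc_radius S"
    proof (rule enc_ge[OF assms(1)])
      fix c r assume "S \<subseteq> cball c r"
      show "snd p0 \<le> r"
      proof (cases "r \<le> r1")
        case True thus ?thesis using p0(2)[of "(c,r)"] \<open>S \<subseteq> cball c r\<close> by (auto simp: P_def)
      next
        case False thus ?thesis using p0(1) by (auto simp: P_def)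
      qed
    qed
  qed
  thus ?thesis using p0(1) by (auto simp: P_def)
qed

lemma enc_center_ball:
  fixes S :: "'a::euclidean_space set"
  assumes "bounded S" "S \<noteq> {}"
  shows "S \<subseteq> cball (enc_center S) (enc_radius S)"
  unfolding enc_center_def using enc_exists[OF assms] by (rule someI_ex)

lemma enc_char:
  fixes S :: "'a::euclidean_space set"
  assumes "compact S" "S \<noteq> {}"
  shows "enc_center S \<in> convex hull {y\<in>S. dist (enc_center S) y = enc_radius S}"
proof (rule ccontr)
  define c where "c = enc_center S"
  define F where "F = enc_radius S"
  define A where "A = {y\<in>S. dist c y = F}"
  assume "enc_center S \<notin> convex hull {y\<in>S. dist (enc_center S) y = enc_radius S}"
  hence cA: "c \<notin> convex hull A" by (simp add: c_def F_def A_def)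
  have bS: "bounded S" using assms(1) compact_imp_bounded by blast
  have SF: "S \<subseteq> cball c F" using enc_center_ball[OF bS assms(2)] by (simp add: c_def F_def)
  have F0: "0 \<le> F" using enc_nonneg[OF bS assms(2)] by (simp add: F_def)
  obtain a b where ab: "inner a c < b" "\<And>x. x \<in> convex hull A \<Longrightarrow> inner a x > b"
  proof -
    have "compact A"
    proof -
      have "A = S \<inter> sphere c F" by (auto simp: A_def)
      thus ?thesis using assms(1) by (simp add: compact_Int_closed)
    qed
    hence "closed (convex hull A)" by (simp add: compact_convex_hull compact_imp_closed)
    from separating_hyperplane_closed_point[OF convex_convex_hull this cA]
    obtain a b where "inner a c < b" "\<forall>x\<in>convex hull A. inner a x > b" by blast
    thus ?thesis using that by simp
  qed
  define \<delta> where "\<delta> = b - inner a c"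
  have d0: "0 < \<delta>" using ab(1) by (simp add: \<delta>_def)
  have inA: "inner a (y - c) > \<delta>" if "y \<in> A" for y
    using ab(2)[OF hull_inc[OF that]] by (simp add: \<delta>_def inner_diff_right)
  define T where "T = {y\<in>S. inner a (y - c) \<le> \<delta>/2}"
  have Tlt: "dist c y < F" if "y \<in> T" for y
  proof -
    have "dist c y \<le> F" using that SF by (auto simp: T_def)
    moreover have "y \<notin> A"
    proof
      assume "y \<in> A"
      hence "inner a (y - c) > \<delta>" by (rule inA)
      moreover have "inner a (y - c) \<le> \<delta>/2" using that by (simp add: T_def)
      ultimately show False using d0 by simp
    qed
    ultimately show ?thesis using that by (auto simp: A_def T_def)
  qed
  obtain G where G: "0 \<le> G" "G < F" "\<And>y. y \<in> T \<Longrightarrow> dist c y \<le> G"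
  proof (cases "T = {}")
    case True
    have "F \<noteq> 0"
    proof
      assume "F = 0"
      have "S \<subseteq> {c}"
      proof
        fix y assume "y \<in> S"
        hence "dist c y \<le> 0" using SF \<open>F = 0\<close> by auto
        thus "y \<in> {c}" by simp
      qed
      hence "S = {c}" using assms(2) by (simp add: subset_singleton_iff)
      hence "c \<in> A" using \<open>F = 0\<close> by (simp add: A_def)
      hence "c \<in> convex hull A" by (rule hull_inc)
      thus False using cA by contradiction
    qed
    thus ?thesis using that[of 0] True F0 by auto
  next
    case False
    have "compact T"
    proof -
      have "T = S \<inter> {y. inner a (y - c) \<le> \<delta>/2}" by (auto simp: T_def)
      moreover have "closed {y. inner a (y - c) \<le> \<delta>/2}"
        by (auto intro!: closed_Collect_le continuous_intros)
      ultimately show ?thesis using assms(1) by (simp add: compact_Int_closed)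
    qed
    moreover have "continuous_on T (dist c)" by (rule continuous_on_dist[OF continuous_on_const continuous_on_id])
    ultimately obtain ym where ym: "ym \<in> T" "\<And>y. y \<in> T \<Longrightarrow> dist c y \<le> dist c ym"
      using continuous_attains_sup[of T "dist c"] False by blast
    show ?thesis using that[of "dist c ym"] ym Tlt[OF ym(1)] by auto
  qed
  define na where "na = norm a"
  define \<epsilon> where "\<epsilon> = min ((F - G) / (2 * (na + 1))) (\<delta> / (2 * (na\<^sup>2 + 1)))"
  have na0: "0 \<le> na" by (simp add: na_def)
  have p1: "0 < (F - G) / (2 * (na + 1))" using G na0 by (intro divide_pos_pos) auto
  have p2: "0 < \<delta> / (2 * (na\<^sup>2 + 1))" using d0 by (intro divide_pos_pos) (auto intro: add_nonneg_pos)
  have e0: "0 < \<epsilon>" using p1 p2 by (simp add: \<epsilon>_def)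
  have e1: "\<epsilon> * na < F - G"
  proof -
    have "\<epsilon> \<le> (F - G) / (2 * (na + 1))" by (simp add: \<epsilon>_def)
    hence "\<epsilon> * (2 * (na + 1)) \<le> F - G" using na0 by (simp add: field_simps)
    moreover have "\<epsilon> * na < \<epsilon> * (2 * (na + 1))" using e0 na0 by simp
    ultimately show ?thesis by linarith
  qed
  have e2: "\<epsilon> * na\<^sup>2 \<le> \<delta> / 2"
  proof -
    have "\<epsilon> \<le> \<delta> / (2 * (na\<^sup>2 + 1))" by (simp add: \<epsilon>_def)
    hence "\<epsilon> * (2 * (na\<^sup>2 + 1)) \<le> \<delta>" by (simp add: field_simps add_pos_nonneg)
    moreover have "\<epsilon> * na\<^sup>2 \<le> \<epsilon> * (na\<^sup>2 + 1)" using e0 by simp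
    ultimately show ?thesis by linarith
  qed
  define c' where "c' = c + \<epsilon> *\<^sub>R a"
  define F' where "F' = max (G + \<epsilon> * na) (sqrt (F\<^sup>2 - \<epsilon> * \<delta> / 2))"
  have F'F: "F' < F"
  proof -
    have "G + \<epsilon> * na < F" using e1 by simp
    moreover have "sqrt (F\<^sup>2 - \<epsilon> * \<delta> / 2) < F"
    proof -
      have "F\<^sup>2 - \<epsilon> * \<delta> / 2 < F\<^sup>2" using e0 d0 by simp
      hence "sqrt (F\<^sup>2 - \<epsilon> * \<delta> / 2) < sqrt (F\<^sup>2)" by (rule real_sqrt_less_mono)
      thus ?thesis using F0 by simp
    qed
    ultimately show ?thesis by (simp add: F'_def)
  qed
  have "S \<subseteq> cball c' F'"
  proof
    fix y assume yS: "y \<in> S"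
    show "y \<in> cball c' F'"
    proof (cases "y \<in> T")
      case True
      have "dist c' y \<le> dist c y + dist c c'" by (metis dist_commute dist_triangle)
      also have "dist c c' = \<epsilon> * na" using e0 by (simp add: c'_def dist_norm na_def)
      finally have "dist c' y \<le> G + \<epsilon> * na" using G(3)[OF True] by simp
      thus ?thesis by (simp add: F'_def)
    next
      case False
      hence inn: "inner a (y - c) > \<delta>/2" using yS by (auto simp: T_def)
      have "(dist c' y)\<^sup>2 = (norm ((y - c) - \<epsilon> *\<^sub>R a))\<^sup>2"
      proof -
        have "c' - y = - ((y - c) - \<epsilon> *\<^sub>R a)" by (simp add: c'_def)
        thus ?thesis by (simp only: dist_norm norm_minus_cancel)
      qed
      also have "\<dots> = (norm (y - c))\<^sup>2 - 2 * \<epsilon> * inner a (y - c) + \<epsilon>\<^sup>2 * na\<^sup>2"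
      proof -
        have "(norm ((y - c) - \<epsilon> *\<^sub>R a))\<^sup>2 = inner ((y - c) - \<epsilon> *\<^sub>R a) ((y - c) - \<epsilon> *\<^sub>R a)"
          by (rule power2_norm_eq_inner)
        also have "\<dots> = inner (y - c) (y - c) - 2 * \<epsilon> * inner a (y - c) + \<epsilon>\<^sup>2 * inner a a"
          by (simp only: inner_diff_left inner_diff_right inner_scaleR_left inner_scaleR_right power2_eq_square inner_commute[of y a] inner_commute[of c a] inner_commute[of y c]) algebra
        finally show ?thesis by (simp add: na_def power2_norm_eq_inner)
      qed
      also have "\<dots> \<le> F\<^sup>2 - \<epsilon> * \<delta> / 2"
      proof -
        have "norm (y - c) \<le> F" using SF yS by (auto simp: dist_norm norm_minus_commute)
        hence "(norm (y - c))\<^sup>2 \<le> F\<^sup>2" by (simp add: power_mono)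
        moreover have "2 * \<epsilon> * inner a (y - c) \<ge> \<epsilon> * \<delta>" using mult_left_mono[OF less_imp_le[OF inn], of \<epsilon>] e0 by simp
        moreover have "\<epsilon>\<^sup>2 * na\<^sup>2 \<le> \<epsilon> * \<delta> / 2" using e2 e0
          using mult_left_mono[OF e2, of \<epsilon>] e0 by (simp add: power2_eq_square mult.assoc)
        ultimately show ?thesis by linarith
      qed
      finally have "(dist c' y)\<^sup>2 \<le> F\<^sup>2 - \<epsilon> * \<delta> / 2" .
      hence "dist c' y \<le> sqrt (F\<^sup>2 - \<epsilon> * \<delta> / 2)" by (simp add: real_le_rsqrt)
      thus ?thesis by (simp add: F'_def)
    qed
  qed
  hence "F \<le> F'" using enc_le[OF assms(2)] by (simp add: F_def)
  thus False using F'F by simp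
qed

lemma norm_add_sq: "(norm (x + w))\<^sup>2 = (norm x)\<^sup>2 + 2 * inner x w + (norm w)\<^sup>2"
  for x w :: "'a::real_inner"
  using dot_norm[of x w] by simp

lemma dist_shift_sq:
  fixes z y v :: "'a::euclidean_space"
  shows "(dist (z + e *\<^sub>R v) y)\<^sup>2 = (dist z y)\<^sup>2 + 2 * e * inner (z - y) v + e\<^sup>2 * (norm v)\<^sup>2"
proof -
  have "dist (z + e *\<^sub>R v) y = norm ((z - y) + e *\<^sub>R v)" by (simp add: dist_norm algebra_simps)
  hence "(dist (z + e *\<^sub>R v) y)\<^sup>2 = (norm (z - y))\<^sup>2 + 2 * inner (z - y) (e *\<^sub>R v) + (norm (e *\<^sub>R v))\<^sup>2"
    using norm_add_sq[of "z - y" "e *\<^sub>R v"] by simp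
  moreover have "(norm (e *\<^sub>R v))\<^sup>2 = e\<^sup>2 * (norm v)\<^sup>2" by (simp add: power_mult_distrib)
  ultimately show ?thesis by (simp add: dist_norm)
qed

lemma infdist_ge_R:
  fixes K :: "'a::euclidean_space set"
  assumes "closed K" "K \<noteq> {}" "\<And>y. y \<in> K \<Longrightarrow> b \<le> dist x y"
  shows "b \<le> infdist x K"
  using nearest_exists[OF assms(1,2), of x] assms(3) by auto

lemma sep_from_Theta:
  fixes K :: "'a::euclidean_space set"
  assumes "closed K" "K \<noteq> {}" "compact T" "T \<subseteq> K" "\<And>y. y \<in> T \<Longrightarrow> y \<notin> ThetaK K z"
  shows "\<exists>\<eta>>0. \<eta> \<le> 1 \<and> (\<forall>y\<in>T. infdist z K + \<eta> \<le> dist z y)"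
proof (cases "T = {}")
  case True thus ?thesis by (intro exI[of _ 1]) auto
next
  case False
  have "continuous_on T (dist z)" by (rule continuous_on_dist[OF continuous_on_const continuous_on_id])
  then obtain y0 where y0: "y0 \<in> T" "\<And>y. y \<in> T \<Longrightarrow> dist z y0 \<le> dist z y"
    using continuous_attains_inf[OF assms(3) False] by blast
  have "infdist z K \<le> dist z y0" using y0(1) assms(4) by (intro infdist_le) auto
  moreover have "dist z y0 \<noteq> infdist z K" using assms(5)[OF y0(1)] y0(1) assms(4) by (auto simp: Theta_alt)
  ultimately have lt: "infdist z K < dist z y0" by simp
  have "\<forall>y\<in>T. infdist z K + min 1 (dist z y0 - infdist z K) \<le> dist z y"
  proof
    fix y assume "y \<in> T"
    hence "dist z y0 \<le> dist z y" by (rule y0(2))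
    moreover have "min 1 (dist z y0 - infdist z K) \<le> dist z y0 - infdist z K" by simp
    ultimately show "infdist z K + min 1 (dist z y0 - infdist z K) \<le> dist z y" by linarith
  qed
  moreover have "0 < min 1 (dist z y0 - infdist z K)" using lt by simp
  ultimately show ?thesis by (intro exI[of _ "min 1 (dist z y0 - infdist z K)"]) auto
qed

lemma dir_lemma:
  fixes K :: "'a::euclidean_space set"
  assumes "closed K" "K \<noteq> {}" "\<And>y. y \<in> ThetaK K z \<Longrightarrow> inner (z - y) v > m"
  shows "\<exists>\<rho>0>0. \<forall>e. 0 < e \<and> e \<le> \<rho>0 \<longrightarrow> (infdist (z + e *\<^sub>R v) K)\<^sup>2 \<ge> (infdist z K)\<^sup>2 + 2 * e * m"
proof -
  define R where "R = infdist z K"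
  have R0: "0 \<le> R" by (simp add: R_def infdist_nonneg)
  define T where "T = K \<inter> cball z (R + 1) \<inter> {y. inner (z - y) v \<le> m}"
  have "closed {y. inner (z - y) v \<le> m}" by (auto intro!: closed_Collect_le continuous_intros)
  hence cT: "compact T" unfolding T_def using assms(1)
    by (intro closed_Int_compact compact_Int_closed) auto
  have "\<And>y. y \<in> T \<Longrightarrow> y \<notin> ThetaK K z"
  proof
    fix y assume "y \<in> T" "y \<in> ThetaK K z"
    thus False using assms(3)[of y] by (simp add: T_def)
  qed
  then obtain \<eta> where eta: "\<eta> > 0" "\<eta> \<le> 1" "\<And>y. y \<in> T \<Longrightarrow> R + \<eta> \<le> dist z y"
    using sep_from_Theta[OF assms(1,2) cT] unfolding R_def T_def by blast
  have far: "R + \<eta> \<le> dist z y" if "y \<in> K" "inner (z - y) v \<le> m" for y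
  proof (cases "dist z y \<le> R + 1")
    case True thus ?thesis using eta(3)[of y] that by (simp add: T_def)
  next
    case False thus ?thesis using eta(2) by simp
  qed
  define nv where "nv = norm v"
  define \<rho>0 where "\<rho>0 = min (\<eta> / (2 * (nv + 1))) (\<eta>\<^sup>2 / (8 * (\<bar>m\<bar> + 1)))"
  have nv0: "0 \<le> nv" by (simp add: nv_def)
  have "\<rho>0 > 0" unfolding \<rho>0_def using eta(1) nv0
    by (auto intro!: divide_pos_pos)
  moreover have "(infdist (z + e *\<^sub>R v) K)\<^sup>2 \<ge> R\<^sup>2 + 2 * e * m" if e: "0 < e" "e \<le> \<rho>0" for e
  proof -
    have e1: "e * nv \<le> \<eta> / 2"
    proof -
      have "e \<le> \<eta> / (2 * (nv + 1))" using e(2) by (simp add: \<rho>0_def)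
      hence "e * (2 * (nv + 1)) \<le> \<eta>" using nv0 by (simp add: field_simps)
      moreover have "e * nv \<le> e * (nv + 1)" using e(1) by simp
      ultimately show ?thesis by linarith
    qed
    have e2: "2 * e * \<bar>m\<bar> \<le> \<eta>\<^sup>2 / 4"
    proof -
      have "e \<le> \<eta>\<^sup>2 / (8 * (\<bar>m\<bar> + 1))" using e(2) by (simp add: \<rho>0_def)
      hence "e * (8 * (\<bar>m\<bar> + 1)) \<le> \<eta>\<^sup>2" by (simp add: field_simps add_pos_nonneg)
      moreover have "e * \<bar>m\<bar> \<le> e * (\<bar>m\<bar> + 1)" using e(1) by simp
      ultimately show ?thesis by linarith
    qed
    have key: "R\<^sup>2 + 2 * e * m \<le> (dist (z + e *\<^sub>R v) y)\<^sup>2" if yK: "y \<in> K" for y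
    proof (cases "inner (z - y) v \<le> m")
      case True
      have "R + \<eta> \<le> dist z y" using far[OF yK True] .
      moreover have "dist z y \<le> dist z (z + e *\<^sub>R v) + dist (z + e *\<^sub>R v) y" by (rule dist_triangle)
      moreover have "dist z (z + e *\<^sub>R v) = e * nv" using e(1) by (simp add: dist_norm nv_def)
      ultimately have "R + \<eta> / 2 \<le> dist (z + e *\<^sub>R v) y" using e1 by linarith
      hence "(R + \<eta> / 2)\<^sup>2 \<le> (dist (z + e *\<^sub>R v) y)\<^sup>2" using R0 eta(1) by (intro power_mono) auto
      moreover have "R\<^sup>2 + 2 * e * m \<le> (R + \<eta> / 2)\<^sup>2"
      proof -
        have "(R + \<eta> / 2)\<^sup>2 = R\<^sup>2 + R * \<eta> + \<eta>\<^sup>2 / 4" by (simp add: power2_eq_square field_simps)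
        moreover have "0 \<le> R * \<eta>" using R0 eta(1) by simp
        moreover have "2 * e * m \<le> 2 * e * \<bar>m\<bar>" using e(1) by simp
        ultimately show ?thesis using e2 by linarith
      qed
      ultimately show ?thesis by linarith
    next
      case False
      have "R \<le> dist z y" using yK by (simp add: R_def infdist_le)
      hence "R\<^sup>2 \<le> (dist z y)\<^sup>2" using R0 by (intro power_mono) auto
      moreover have "2 * e * m \<le> 2 * e * inner (z - y) v" using False e(1) by simp
      moreover have "0 \<le> e\<^sup>2 * (norm v)\<^sup>2" by simp
      ultimately show ?thesis unfolding dist_shift_sq by linarith
    qed
    obtain y0 where "y0 \<in> K" "infdist (z + e *\<^sub>R v) K = dist (z + e *\<^sub>R v) y0"
      using nearest_exists[OF assms(1,2)] by blast
    thus ?thesis using key by simp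
  qed
  ultimately show ?thesis unfolding R_def by blast
qed

lemma infdist_lt_ex:
  fixes A :: "'a::euclidean_space set"
  assumes "closed A" "A \<noteq> {}" "infdist x A < e"
  shows "\<exists>a\<in>A. dist x a < e"
  using nearest_exists[OF assms(1,2), of x] assms(3) by auto

lemma FK_usc:
  fixes S :: "'a::euclidean_space set"
  assumes "closed S" "S \<noteq> {}" "\<epsilon> > 0"
  shows "\<exists>\<delta>>0. \<forall>z'. dist z' z < \<delta> \<longrightarrow> FK S z' \<le> FK S z + \<epsilon>"
proof -
  define R where "R = infdist z S"
  define \<Theta> where "\<Theta> = ThetaK S z"
  have Tc: "compact \<Theta>" and Tne: "\<Theta> \<noteq> {}"
    using Theta_compact[OF assms(1)] Theta_ne[OF assms(1,2)] by (auto simp: \<Theta>_def)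
  have Tb: "bounded \<Theta>" using Tc by (rule compact_imp_bounded)
  define c where "c = enc_center \<Theta>"
  define F where "F = enc_radius \<Theta>"
  have TF: "\<Theta> \<subseteq> cball c F" using enc_center_ball[OF Tb Tne] by (simp add: c_def F_def)
  define T where "T = S \<inter> cball z (R + 1) \<inter> {y. \<epsilon> \<le> infdist y \<Theta>}"
  have "closed {y. \<epsilon> \<le> infdist y \<Theta>}" by (auto intro!: closed_Collect_le continuous_intros)
  hence cT: "compact T" unfolding T_def using assms(1)
    by (intro closed_Int_compact compact_Int_closed) auto
  have "\<And>y. y \<in> T \<Longrightarrow> y \<notin> ThetaK S z"
  proof
    fix y assume "y \<in> T" "y \<in> ThetaK S z"
    hence "infdist y \<Theta> = 0" by (simp add: \<Theta>_def)
    thus False using \<open>y \<in> T\<close> assms(3) by (simp add: T_def)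
  qed
  moreover have "T \<subseteq> S" by (auto simp: T_def)
  ultimately obtain \<eta> where eta: "\<eta> > 0" "\<eta> \<le> 1" "\<And>y. y \<in> T \<Longrightarrow> R + \<eta> \<le> dist z y"
    using sep_from_Theta[OF assms(1,2) cT] unfolding R_def by blast
  have "\<forall>z'. dist z' z < \<eta> / 2 \<longrightarrow> FK S z' \<le> FK S z + \<epsilon>"
  proof (intro allI impI)
    fix z' assume dz: "dist z' z < \<eta> / 2"
    have sub: "ThetaK S z' \<subseteq> cball c (F + \<epsilon>)"
    proof
      fix y' assume y': "y' \<in> ThetaK S z'"
      hence y'S: "y' \<in> S" and dy': "dist z' y' = infdist z' S" by (auto simp: Theta_alt)
      have "infdist z' S \<le> infdist z S + dist z' z" by (rule infdist_triangle)
      hence "dist z y' < R + \<eta>"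
        using dist_triangle[of z y' z'] dz dy' by (simp add: R_def dist_commute)
      hence "y' \<notin> T" using eta(3)[of y'] by auto
      moreover have "dist z y' \<le> R + 1" using \<open>dist z y' < R + \<eta>\<close> eta(2) by simp
      ultimately have "infdist y' \<Theta> < \<epsilon>" using y'S by (auto simp: T_def)
      then obtain y where y: "y \<in> \<Theta>" "dist y' y < \<epsilon>"
        using infdist_lt_ex[OF compact_imp_closed[OF Tc] Tne] by blast
      have "dist c y \<le> F" using TF y(1) by auto
      hence "dist c y' \<le> F + \<epsilon>" using dist_triangle[of c y' y] y(2) by (simp add: dist_commute)
      thus "y' \<in> cball c (F + \<epsilon>)" by simp
    qed
    have "FK S z' \<le> F + \<epsilon>"
      unfolding FK_def using enc_le[OF Theta_ne[OF assms(1,2)] sub] .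
    thus "FK S z' \<le> FK S z + \<epsilon>" by (simp add: FK_def F_def \<Theta>_def)
  qed
  thus ?thesis using eta(1) by (intro exI[of _ "\<eta> / 2"]) auto
qed

lemma usc_max:
  fixes f :: "'a::metric_space \<Rightarrow> real"
  assumes "compact X" "X \<noteq> {}"
    and usc: "\<And>z e. z \<in> X \<Longrightarrow> e > 0 \<Longrightarrow> \<exists>d>0. \<forall>z'\<in>X. dist z' z < d \<longrightarrow> f z' < f z + e"
  shows "\<exists>z\<in>X. \<forall>z'\<in>X. f z' \<le> f z"
proof (rule ccontr)
  assume "\<not> ?thesis"
  hence "\<forall>z\<in>X. \<exists>z''\<in>X. f z < f z''" by (auto simp: not_le)
  then obtain g where g: "\<And>z. z \<in> X \<Longrightarrow> g z \<in> X \<and> f z < f (g z)" by metis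
  have "\<forall>z\<in>X. \<exists>d>0. \<forall>z'\<in>X. dist z' z < d \<longrightarrow> f z' < f (g z)"
  proof
    fix z assume zX: "z \<in> X"
    from usc[OF zX, of "f (g z) - f z"] g[OF zX] obtain d where
      "d > 0" "\<forall>z'\<in>X. dist z' z < d \<longrightarrow> f z' < f z + (f (g z) - f z)" by auto
    thus "\<exists>d>0. \<forall>z'\<in>X. dist z' z < d \<longrightarrow> f z' < f (g z)" by auto
  qed
  then obtain d where d: "\<And>z. z \<in> X \<Longrightarrow> d z > 0 \<and> (\<forall>z'\<in>X. dist z' z < d z \<longrightarrow> f z' < f (g z))"
    by metis
  have cover: "X \<subseteq> (\<Union>z\<in>X. ball z (d z))"
  proof
    fix x assume "x \<in> X"
    moreover have "x \<in> ball x (d x)" using d[OF \<open>x \<in> X\<close>] by simp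
    ultimately show "x \<in> (\<Union>z\<in>X. ball z (d z))" by blast
  qed
  obtain C where C: "C \<subseteq> X" "finite C" "X \<subseteq> (\<Union>z\<in>C. ball z (d z))"
    using compactE_image[OF assms(1) _ cover] by blast
  have Cne: "C \<noteq> {}" using C(3) assms(2) by auto
  define M where "M = Max ((\<lambda>z. f (g z)) ` C)"
  have "M \<in> (\<lambda>z. f (g z)) ` C" unfolding M_def using C(2) Cne by (intro Max_in) auto
  then obtain w0 where w0: "w0 \<in> C" "M = f (g w0)" by blast
  have gX: "g w0 \<in> X" using g C(1) w0(1) by blast
  then obtain w where w: "w \<in> C" "g w0 \<in> ball w (d w)" using C(3) by blast
  have "f (g w0) < f (g w)" using d[of w] C(1) w gX by (auto simp: dist_commute)
  moreover have "f (g w) \<le> M" unfolding M_def using C(2) w(1) by (intro Max_ge) auto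
  ultimately show False using w0(2) by simp
qed

lemma enc_scale:
  fixes S :: "'a::euclidean_space set"
  assumes "bounded S" "S \<noteq> {}" "s > 0"
  shows "enc_radius ((\<lambda>k. z + s *\<^sub>R (k - z)) ` S) = s * enc_radius S"
proof -
  define h where "h = (\<lambda>k::'a. z + s *\<^sub>R (k - z))"
  have dh: "dist (h a) (h b) = s * dist a b" for a b
  proof -
    have "h a - h b = s *\<^sub>R (a - b)" by (simp add: h_def algebra_simps)
    thus ?thesis using assms(3) by (simp add: dist_norm)
  qed
  define F where "F = enc_radius S"
  obtain c0 where c0: "S \<subseteq> cball c0 F" using enc_exists[OF assms(1,2)] by (auto simp: F_def)
  have sub: "h ` S \<subseteq> cball (h c0) (s * F)"
  proof
    fix x assume "x \<in> h ` S"
    then obtain y where "y \<in> S" "x = h y" by blast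
    hence "dist c0 y \<le> F" using c0 by auto
    hence "s * dist c0 y \<le> s * F" using assms(3) by simp
    thus "x \<in> cball (h c0) (s * F)" using dh \<open>x = h y\<close> by simp
  qed
  have ne: "h ` S \<noteq> {}" using assms(2) by simp
  have "enc_radius (h ` S) \<le> s * F" by (rule enc_le[OF ne sub])
  moreover have "s * F \<le> enc_radius (h ` S)"
  proof (rule enc_ge)
    show "bounded (h ` S)" using sub bounded_cball bounded_subset by blast
  next
    fix c r assume cr: "h ` S \<subseteq> cball c r"
    define c' where "c' = z + (1 / s) *\<^sub>R (c - z)"
    have hc: "h c' = c" using assms(3) by (simp add: h_def c'_def algebra_simps)
    have "S \<subseteq> cball c' (r / s)"
    proof
      fix y assume "y \<in> S"
      hence "dist c (h y) \<le> r" using cr by auto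
      hence "s * dist c' y \<le> r" using dh[of c' y] hc by simp
      hence "dist c' y \<le> r / s" using assms(3) by (simp add: field_simps)
      thus "y \<in> cball c' (r / s)" by simp
    qed
    hence "F \<le> r / s" unfolding F_def by (rule enc_le[OF assms(2)])
    thus "s * F \<le> r" using assms(3) by (simp add: field_simps)
  qed
  ultimately show ?thesis by (simp add: h_def F_def)
qed

lemma offset_closed: "closed (offset K a)"
  unfolding offset_def by (auto intro!: closed_Collect_le continuous_intros)

lemma offset_sub: "a \<ge> 0 \<Longrightarrow> K \<subseteq> offset K a"
  unfolding offset_def by auto

lemma enc_single: "enc_radius {x::'a::euclidean_space} = 0"
proof (rule antisym)
  show "enc_radius {x} \<le> 0" by (rule enc_le[of "{x}" x]) auto
  show "0 \<le> enc_radius {x}" by (rule enc_nonneg) auto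
qed

lemma FK_inside:
  fixes S :: "'a::euclidean_space set"
  assumes "x \<in> S"
  shows "FK S x = 0"
proof -
  have "ThetaK S x = {x}" using assms by (auto simp: Theta_alt)
  thus ?thesis by (simp add: FK_def enc_single)
qed

lemma offset_rel:
  fixes K :: "'a::euclidean_space set"
  assumes "closed K" "K \<noteq> {}" "\<alpha> > 0" "infdist z K > \<alpha>"
  shows "infdist z (offset K \<alpha>) = infdist z K - \<alpha>"
    and "FK (offset K \<alpha>) z = ((infdist z K - \<alpha>) / infdist z K) * FK K z"
proof -
  define R where "R = infdist z K"
  define L where "L = offset K \<alpha>"
  define s where "s = (R - \<alpha>) / R"
  define h where "h = (\<lambda>k::'a. z + s *\<^sub>R (k - z))"
  have R0: "R > \<alpha>" using assms(4) by (simp add: R_def)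
  have s0: "s > 0" using R0 assms(3) by (simp add: s_def)
  have Lc: "closed L" by (simp add: L_def offset_closed)
  have Lne: "L \<noteq> {}" using offset_sub[of \<alpha> K] assms(2,3) by (auto simp: L_def)
  have lowL: "R - \<alpha> \<le> dist z y" if "y \<in> L" for y
  proof -
    have "infdist z K \<le> infdist y K + dist z y" by (rule infdist_triangle)
    moreover have "infdist y K \<le> \<alpha>" using that by (simp add: L_def offset_def)
    ultimately show ?thesis by (simp add: R_def)
  qed
  have hK: "h k \<in> L \<and> dist z (h k) = R - \<alpha>" if "k \<in> ThetaK K z" for k
  proof -
    have kK: "k \<in> K" and dk: "dist z k = R" using that by (auto simp: Theta_alt R_def)
    have "z - h k = s *\<^sub>R (z - k)" by (simp add: h_def algebra_simps)
    hence d1: "dist z (h k) = s * R" using s0 dk by (simp add: dist_norm)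
    have "h k - k = (1 - s) *\<^sub>R (z - k)" by (simp add: h_def algebra_simps)
    moreover have "1 - s = \<alpha> / R" using R0 assms(3) by (simp add: s_def field_simps)
    ultimately have "dist (h k) k = \<alpha>" using dk R0 assms(3) by (simp add: dist_norm dist_commute)
    hence "infdist (h k) K \<le> \<alpha>" using infdist_le[OF kK, of "h k"] by simp
    moreover have "s * R = R - \<alpha>" using R0 assms(3) by (simp add: s_def)
    ultimately show ?thesis using d1 by (simp add: L_def offset_def)
  qed
  obtain k0 where k0: "k0 \<in> ThetaK K z" using Theta_ne[OF assms(1,2)] by blast
  have iL: "infdist z L = R - \<alpha>"
  proof (rule antisym)
    show "infdist z L \<le> R - \<alpha>" using hK[OF k0] infdist_le[of "h k0" L z] by simp
    show "R - \<alpha> \<le> infdist z L" using lowL by (intro infdist_ge_R[OF Lc Lne])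
  qed
  thus "infdist z (offset K \<alpha>) = infdist z K - \<alpha>" by (simp add: L_def R_def)
  have TL: "ThetaK L z = h ` ThetaK K z"
  proof
    show "h ` ThetaK K z \<subseteq> ThetaK L z" using hK iL by (auto simp: Theta_alt)
  next
    show "ThetaK L z \<subseteq> h ` ThetaK K z"
    proof
      fix y assume "y \<in> ThetaK L z"
      hence yL: "y \<in> L" and dy: "dist z y = R - \<alpha>" using iL by (auto simp: Theta_alt)
      obtain k where kK: "k \<in> K" and dk: "infdist y K = dist y k"
        using nearest_exists[OF assms(1,2)] by blast
      have "dist y k \<le> \<alpha>" using yL dk by (simp add: L_def offset_def)
      have "R \<le> dist z k" using infdist_le[OF kK] by (simp add: R_def)
      have tri: "dist z k \<le> dist z y + dist y k" by (rule dist_triangle)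
      have dzk: "dist z k = R" using \<open>R \<le> dist z k\<close> tri dy \<open>dist y k \<le> \<alpha>\<close> by simp
      have dyk: "dist y k = \<alpha>" using \<open>R \<le> dist z k\<close> tri dy \<open>dist y k \<le> \<alpha>\<close> by simp
      have "dist z k = dist z y + dist y k" using dzk dyk dy by simp
      hence "norm (z - y) *\<^sub>R (y - k) = norm (y - k) *\<^sub>R (z - y)" by (simp add: dist_triangle_eq)
      hence "(R - \<alpha>) *\<^sub>R (y - k) = \<alpha> *\<^sub>R (z - y)"
        using dy dyk by (simp add: dist_norm)
      hence "R *\<^sub>R y = \<alpha> *\<^sub>R z + (R - \<alpha>) *\<^sub>R k" by (simp add: algebra_simps)
      moreover have "R *\<^sub>R h k = \<alpha> *\<^sub>R z + (R - \<alpha>) *\<^sub>R k"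
      proof -
        have "R *\<^sub>R h k = R *\<^sub>R z + (R * s) *\<^sub>R (k - z)" by (simp add: h_def scaleR_add_right)
        also have "R * s = R - \<alpha>" using R0 assms(3) by (simp add: s_def)
        finally show ?thesis by (simp add: algebra_simps)
      qed
      ultimately have "R *\<^sub>R y = R *\<^sub>R h k" by simp
      hence "y = h k" using R0 assms(3) by simp
      moreover have "k \<in> ThetaK K z" using kK dzk by (simp add: Theta_alt R_def)
      ultimately show "y \<in> h ` ThetaK K z" by blast
    qed
  qed
  have "FK L z = s * FK K z"
    unfolding FK_def TL h_def
    using enc_scale[OF compact_imp_bounded[OF Theta_compact[OF assms(1)]] Theta_ne[OF assms(1,2)] s0] .
  thus "FK (offset K \<alpha>) z = ((infdist z K - \<alpha>) / infdist z K) * FK K z" by (simp add: L_def s_def R_def)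
qed

lemma ray_closed_convex:
  fixes w d :: "'a::euclidean_space"
  shows "closed {w - s *\<^sub>R d | s. s \<ge> 0} \<and> convex {w - s *\<^sub>R d | s. s \<ge> 0}"
proof (cases "d = 0")
  case True
  hence "{w - s *\<^sub>R d | s. s \<ge> 0} = {w}" by auto
  thus ?thesis by simp
next
  case False
  define f where "f = (\<lambda>s::real. s *\<^sub>R (- d))"
  have lin: "linear f" unfolding f_def by (rule linear_scaleR_left)
  have inj: "inj f" unfolding f_def using False by (auto simp: inj_on_def)
  have eq: "{w - s *\<^sub>R d | s. s \<ge> 0} = (+) w ` (f ` {0..})"
    by (auto simp: f_def image_iff)
  have "closed (f ` {0..})" by (rule closed_injective_linear_image[OF closed_atLeast lin inj])
  moreover have "convex (f ` {0..})" by (rule convex_linear_image[OF lin convex_real_interval(1)])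
  ultimately show ?thesis unfolding eq by (simp add: closed_translation convex_translation)
qed

lemma lagrange:
  fixes K :: "'a::euclidean_space set"
  assumes "closed K" "K \<noteq> {}" "\<rho> > 0" "w \<in> cball z \<rho>"
    and wmax: "\<And>w'. w' \<in> cball z \<rho> \<Longrightarrow> infdist w' K \<le> infdist w K"
  shows "\<exists>yh \<in> convex hull ThetaK K w. \<exists>s\<ge>0. w - yh = s *\<^sub>R (w - z)"
proof (rule ccontr)
  assume nex: "\<not> ?thesis"
  define d where "d = w - z"
  define Ray where "Ray = {w - s *\<^sub>R d | s. s \<ge> 0}"
  define P where "P = convex hull ThetaK K w"
  have Pc: "compact P" unfolding P_def by (rule compact_convex_hull[OF Theta_compact[OF assms(1)]])
  have Pne: "P \<noteq> {}" unfolding P_def using Theta_ne[OF assms(1,2)] by simp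
  have disj: "Ray \<inter> P = {}"
  proof (rule ccontr)
    assume "Ray \<inter> P \<noteq> {}"
    then obtain yh s where "yh \<in> P" "s \<ge> 0" "yh = w - s *\<^sub>R d" by (auto simp: Ray_def)
    hence "yh \<in> convex hull ThetaK K w" "w - yh = s *\<^sub>R (w - z)" by (auto simp: P_def d_def)
    thus False using nex \<open>s \<ge> 0\<close> by blast
  qed
  obtain a b where ab: "\<forall>x\<in>Ray. inner a x < b" "\<forall>x\<in>P. inner a x > b"
    using separating_hyperplane_closed_compact[of Ray P] ray_closed_convex[of w d] Pc Pne disj
      convex_convex_hull unfolding Ray_def P_def by blast
  have "w = w - 0 *\<^sub>R d \<and> (0::real) \<ge> 0" by simp
  hence "w \<in> Ray" unfolding Ray_def by blast
  hence wR: "inner a w < b" using ab(1) by blast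
  define \<beta> where "\<beta> = b - inner a w"
  have b0: "\<beta> > 0" using wR by (simp add: \<beta>_def)
  have ad: "inner a d \<ge> 0"
  proof (rule ccontr)
    assume "\<not> inner a d \<ge> 0"
    hence neg: "inner a d < 0" by simp
    define s where "s = \<beta> / (- inner a d) + 1"
    have s0: "s \<ge> 0" using neg b0 by (simp add: s_def)
    have "inner a (w - s *\<^sub>R d) = inner a w - s * inner a d" by (simp add: inner_diff_right)
    also have "- s * inner a d = \<beta> - inner a d" using neg by (simp add: s_def field_simps)
    hence "inner a w - s * inner a d = b - inner a d" by (simp add: \<beta>_def)
    finally have "inner a (w - s *\<^sub>R d) > b" using neg by simp
    moreover have "w - s *\<^sub>R d \<in> Ray" using s0 unfolding Ray_def by blast
    ultimately show False using ab(1) by force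
  qed
  define Rw where "Rw = infdist w K"
  have Rw0: "0 \<le> Rw" by (simp add: Rw_def infdist_nonneg)
  have nd: "norm d \<le> \<rho>" using assms(4) by (simp add: d_def dist_norm norm_minus_commute)
  define \<delta> where "\<delta> = \<beta> / (2 * (Rw * \<rho> + 1))"
  have dpos: "0 < Rw * \<rho> + 1" using Rw0 assms(3) by (simp add: add_nonneg_pos)
  have d0: "\<delta> > 0" unfolding \<delta>_def using b0 dpos by simp
  have dle: "\<delta> * (Rw * \<rho>) \<le> \<beta> / 2"
  proof -
    have "\<delta> * (2 * (Rw * \<rho> + 1)) = \<beta>" unfolding \<delta>_def using dpos by simp
    moreover have "\<delta> * (Rw * \<rho>) \<le> \<delta> * (Rw * \<rho> + 1)" using d0 by simp
    ultimately show ?thesis by linarith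
  qed
  define v where "v = - a - \<delta> *\<^sub>R d"
  have vpos: "inner (w - y) v > \<beta> / 2" if "y \<in> ThetaK K w" for y
  proof -
    have "y \<in> P" unfolding P_def using that by (rule hull_inc)
    hence "inner a y > b" using ab(2) by blast
    hence i1: "inner (w - y) (- a) > \<beta>" by (simp add: \<beta>_def inner_diff_left inner_diff_right inner_commute)
    have "inner (w - y) d \<le> norm (w - y) * norm d" by (rule norm_cauchy_schwarz)
    also have "norm (w - y) = Rw" using that by (simp add: Theta_alt Rw_def dist_norm)
    finally have "inner (w - y) d \<le> Rw * norm d" .
    moreover have "Rw * norm d \<le> Rw * \<rho>" by (rule mult_left_mono[OF nd Rw0])
    ultimately have "inner (w - y) d \<le> Rw * \<rho>" by linarith
    hence "\<delta> * inner (w - y) d \<le> \<delta> * (Rw * \<rho>)" by (rule mult_left_mono) (use d0 in simp)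
    hence "\<delta> * inner (w - y) d \<le> \<beta> / 2" using dle by linarith
    moreover have "inner (w - y) v = inner (w - y) (- a) - \<delta> * inner (w - y) d"
      by (simp add: v_def inner_diff_right)
    ultimately show ?thesis using i1 by linarith
  qed
  obtain \<rho>0 where r0: "\<rho>0 > 0" "\<And>e. 0 < e \<Longrightarrow> e \<le> \<rho>0 \<Longrightarrow> (infdist (w + e *\<^sub>R v) K)\<^sup>2 \<ge> Rw\<^sup>2 + 2 * e * (\<beta> / 2)"
    using dir_lemma[OF assms(1,2), where z=w and v=v and m="\<beta> / 2"] vpos unfolding Rw_def by blast
  define nv where "nv = norm v"
  define e where "e = min \<rho>0 (min (\<delta> * \<rho>\<^sup>2 / (nv\<^sup>2 + 1)) (\<rho> / (2 * (nv + 1))))"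
  have nv0: "0 \<le> nv" by (simp add: nv_def)
  have e0: "e > 0" unfolding e_def using r0(1) d0 assms(3) nv0
    by (auto intro!: divide_pos_pos add_nonneg_pos)
  have eb1: "e * nv\<^sup>2 \<le> \<delta> * \<rho>\<^sup>2"
  proof -
    have "e \<le> \<delta> * \<rho>\<^sup>2 / (nv\<^sup>2 + 1)" by (simp add: e_def)
    moreover have "0 < nv\<^sup>2 + 1" by (simp add: add_nonneg_pos)
    ultimately have "e * (nv\<^sup>2 + 1) \<le> \<delta> * \<rho>\<^sup>2" by (simp add: pos_le_divide_eq)
    moreover have "e * nv\<^sup>2 \<le> e * (nv\<^sup>2 + 1)" using e0 by simp
    ultimately show ?thesis by linarith
  qed
  have eb2: "e * nv \<le> \<rho> / 2"
  proof -
    have "e \<le> \<rho> / (2 * (nv + 1))" by (simp add: e_def)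
    hence "e * (2 * (nv + 1)) \<le> \<rho>" using nv0 by (simp add: field_simps)
    moreover have "e * nv \<le> e * (nv + 1)" using e0 by simp
    ultimately show ?thesis by linarith
  qed
  have "(infdist (w + e *\<^sub>R v) K)\<^sup>2 \<ge> Rw\<^sup>2 + 2 * e * (\<beta> / 2)"
    using r0(2)[OF e0] by (simp add: e_def)
  moreover have "2 * e * (\<beta> / 2) > 0" using e0 b0 by simp
  ultimately have "(infdist (w + e *\<^sub>R v) K)\<^sup>2 > Rw\<^sup>2" by linarith
  hence gt: "infdist (w + e *\<^sub>R v) K > Rw" by (rule power2_less_imp_less) (rule infdist_nonneg)
  have "w + e *\<^sub>R v \<in> cball z \<rho>"
  proof -
    have idv: "inner d v \<le> - \<delta> * (norm d)\<^sup>2"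
    proof -
      have "inner d v = - inner d a - \<delta> * inner d d" by (simp add: v_def inner_diff_right)
      also have "inner d a = inner a d" by (rule inner_commute)
      finally have "inner d v = - inner a d - \<delta> * inner d d" .
      thus ?thesis using ad by (simp add: power2_norm_eq_inner)
    qed
    have EA: "w + e *\<^sub>R v - z = d + e *\<^sub>R v" by (simp add: d_def)
    have EB: "dist z (w + e *\<^sub>R v) = norm (w + e *\<^sub>R v - z)"
      by (rule trans[OF dist_commute dist_norm])
    have "dist z (w + e *\<^sub>R v) = norm (d + e *\<^sub>R v)" using EB unfolding EA .
    moreover have "(norm (d + e *\<^sub>R v))\<^sup>2 = (norm d)\<^sup>2 + 2 * inner d (e *\<^sub>R v) + (norm (e *\<^sub>R v))\<^sup>2"
      by (rule norm_add_sq)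
    moreover have "inner d (e *\<^sub>R v) = e * inner d v" by simp
    moreover have "(norm (e *\<^sub>R v))\<^sup>2 = e\<^sup>2 * nv\<^sup>2" by (simp add: nv_def power_mult_distrib)
    ultimately have "(dist z (w + e *\<^sub>R v))\<^sup>2 = (norm d)\<^sup>2 + 2 * e * inner d v + e\<^sup>2 * nv\<^sup>2" by simp
    also have "\<dots> \<le> \<rho>\<^sup>2"
    proof (cases "(norm d)\<^sup>2 \<ge> \<rho>\<^sup>2 / 2")
      case True
      have "2 * e * inner d v \<le> 2 * e * (- \<delta> * (norm d)\<^sup>2)"
        by (rule mult_left_mono[OF idv]) (use e0 in simp)
      also have "\<dots> \<le> - e * \<delta> * \<rho>\<^sup>2"
      proof -
        have "\<rho>\<^sup>2 \<le> 2 * (norm d)\<^sup>2" using True by linarith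
        moreover have "0 \<le> e * \<delta>" using e0 d0 by simp
        ultimately have "e * \<delta> * \<rho>\<^sup>2 \<le> e * \<delta> * (2 * (norm d)\<^sup>2)" by (rule mult_left_mono)
        thus ?thesis by (simp add: algebra_simps)
      qed
      finally have A: "2 * e * inner d v \<le> - e * \<delta> * \<rho>\<^sup>2" .
      have "e\<^sup>2 * nv\<^sup>2 = e * (e * nv\<^sup>2)" by (simp add: power2_eq_square)
      also have "\<dots> \<le> e * (\<delta> * \<rho>\<^sup>2)" using eb1 e0 by simp
      finally have B: "e\<^sup>2 * nv\<^sup>2 \<le> e * \<delta> * \<rho>\<^sup>2" by simp
      have "(norm d)\<^sup>2 \<le> \<rho>\<^sup>2" by (rule power_mono[OF nd norm_ge_zero])
      thus ?thesis using A B by linarith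
    next
      case False
      have "- \<delta> * (norm d)\<^sup>2 \<le> 0" using d0 by simp
      hence "inner d v \<le> 0" using idv by linarith
      hence A: "2 * e * inner d v \<le> 0" using e0 by (simp add: mult_nonneg_nonpos)
      have "e * nv \<ge> 0" using e0 nv0 by simp
      hence "(e * nv)\<^sup>2 \<le> (\<rho> / 2)\<^sup>2" by (rule power_mono[OF eb2])
      hence B: "e\<^sup>2 * nv\<^sup>2 \<le> \<rho>\<^sup>2 / 4" by (simp add: power_mult_distrib power_divide)
      have "0 \<le> \<rho>\<^sup>2" by simp
      thus ?thesis using A B False by linarith
    qed
    finally have "(dist z (w + e *\<^sub>R v))\<^sup>2 \<le> \<rho>\<^sup>2" .
    hence "dist z (w + e *\<^sub>R v) \<le> \<rho>" by (rule power2_le_imp_le) (use assms(3) in simp)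
    thus ?thesis by simp
  qed
  hence "infdist (w + e *\<^sub>R v) K \<le> Rw" using wmax unfolding Rw_def by blast
  thus False using gt by simp
qed

lemma wavg_const: "sum u Y = 1 \<Longrightarrow> (\<Sum>y\<in>Y. u y * (k::real)) = k"
  by (simp add: sum_distrib_right[symmetric])

lemma wavg_ge:
  assumes "\<And>y. y \<in> Y \<Longrightarrow> m \<le> f y" "\<And>y. y \<in> Y \<Longrightarrow> 0 \<le> u y" "sum u Y = 1"
  shows "m \<le> (\<Sum>y\<in>Y. u y * (f y :: real))"
proof -
  have "(\<Sum>y\<in>Y. u y * m) \<le> (\<Sum>y\<in>Y. u y * f y)"
    by (rule sum_mono) (use assms in \<open>simp add: mult_left_mono\<close>)
  thus ?thesis using wavg_const[OF assms(3)] by simp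
qed

lemma wavg_le:
  assumes "\<And>y. y \<in> Y \<Longrightarrow> f y \<le> m" "\<And>y. y \<in> Y \<Longrightarrow> 0 \<le> u y" "sum u Y = 1"
  shows "(\<Sum>y\<in>Y. u y * (f y :: real)) \<le> m"
proof -
  have "(\<Sum>y\<in>Y. u y * f y) \<le> (\<Sum>y\<in>Y. u y * m)"
    by (rule sum_mono) (use assms in \<open>simp add: mult_left_mono\<close>)
  thus ?thesis using wavg_const[OF assms(3)] by simp
qed

lemma hull_repr:
  fixes c :: "'a::euclidean_space"
  assumes "c \<in> convex hull A"
  obtains Y u where "finite Y" "Y \<subseteq> A" "\<And>y. y \<in> Y \<Longrightarrow> 0 \<le> u y" "sum u Y = 1"
    "c = (\<Sum>y\<in>Y. u y *\<^sub>R y)"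
proof -
  have "\<exists>S u. finite S \<and> S \<subseteq> A \<and> (\<forall>x\<in>S. 0 \<le> u x) \<and> sum u S = 1 \<and> (\<Sum>v\<in>S. u v *\<^sub>R v) = c"
    using assms unfolding convex_hull_explicit by simp
  thus ?thesis using that by (metis (no_types, lifting))
qed

lemma alg_claimA:
  fixes a q r g :: real
  assumes "2 * q * r \<le> a + r\<^sup>2" "a \<le> 2 * g * r + r\<^sup>2" "0 \<le> a" "r \<le> 2 * g" "0 \<le> q" "0 < r"
  shows "q\<^sup>2 \<le> a + g\<^sup>2"
proof -
  have r0: "0 \<le> a + r\<^sup>2" using assms(3) by simp
  have "(2 * q * r)\<^sup>2 \<le> (a + r\<^sup>2)\<^sup>2"
    using assms(1,5,6) by (intro power_mono) auto
  moreover have "(a + r\<^sup>2)\<^sup>2 - 4 * r\<^sup>2 * (a + g\<^sup>2) = (a - r\<^sup>2 - 2 * r * g) * (a - r\<^sup>2 + 2 * r * g)"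
    by (simp add: power2_eq_square algebra_simps)
  moreover have "(a - r\<^sup>2 - 2 * r * g) * (a - r\<^sup>2 + 2 * r * g) \<le> 0"
  proof (rule mult_nonpos_nonneg)
    show "a - r\<^sup>2 - 2 * r * g \<le> 0" using assms(2) by (simp add: algebra_simps)
    have "r\<^sup>2 \<le> 2 * r * g" using assms(4,6) by (simp add: power2_eq_square mult_left_mono)
    thus "0 \<le> a - r\<^sup>2 + 2 * r * g" using assms(3) by simp
  qed
  ultimately have "4 * r\<^sup>2 * q\<^sup>2 \<le> 4 * r\<^sup>2 * (a + g\<^sup>2)"
    by (simp add: power_mult_distrib power2_eq_square algebra_simps)
  moreover have "0 < 4 * r\<^sup>2" using assms(6) by simp
  ultimately show ?thesis by simp
qed

lemma Theta_facts:
  fixes K :: "'a::euclidean_space set"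
  assumes "closed K" "K \<noteq> {}"
  shows "compact (ThetaK K z)" "ThetaK K z \<noteq> {}" "bounded (ThetaK K z)"
    "ThetaK K z \<subseteq> cball (enc_center (ThetaK K z)) (FK K z)"
    "0 \<le> FK K z"
  using Theta_compact[OF assms(1)] Theta_ne[OF assms] compact_imp_bounded[OF Theta_compact[OF assms(1)]]
    enc_center_ball[OF compact_imp_bounded[OF Theta_compact[OF assms(1)]] Theta_ne[OF assms]]
    enc_nonneg[OF compact_imp_bounded[OF Theta_compact[OF assms(1)]] Theta_ne[OF assms]]
  unfolding FK_def by auto

lemma char_repr:
  fixes K :: "'a::euclidean_space set"
  assumes "closed K" "K \<noteq> {}"
  obtains Y u where "finite Y" "Y \<subseteq> ThetaK K z"
    "\<And>y. y \<in> Y \<Longrightarrow> dist (enc_center (ThetaK K z)) y = FK K z"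
    "\<And>y. y \<in> Y \<Longrightarrow> 0 \<le> u y" "sum u Y = 1"
    "enc_center (ThetaK K z) = (\<Sum>y\<in>Y. u y *\<^sub>R y)"
proof -
  have "enc_center (ThetaK K z) \<in> convex hull {y\<in>ThetaK K z. dist (enc_center (ThetaK K z)) y = FK K z}"
    unfolding FK_def by (rule enc_char[OF Theta_facts(1,2)[OF assms, of z]])
  from hull_repr[OF this] obtain Y u where "finite Y" "Y \<subseteq> {y\<in>ThetaK K z. dist (enc_center (ThetaK K z)) y = FK K z}"
    "\<And>y. y \<in> Y \<Longrightarrow> 0 \<le> u y" "sum u Y = 1" "enc_center (ThetaK K z) = (\<Sum>y\<in>Y. u y *\<^sub>R y)" by blast
  thus ?thesis using that by blast
qed

lemma pythag:
  fixes K :: "'a::euclidean_space set"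
  assumes "closed K" "K \<noteq> {}"
  shows "(infdist z K)\<^sup>2 = (norm (z - enc_center (ThetaK K z)))\<^sup>2 + (FK K z)\<^sup>2"
proof -
  define c where "c = enc_center (ThetaK K z)"
  obtain Y u where Y: "finite Y" "Y \<subseteq> ThetaK K z" "\<And>y. y \<in> Y \<Longrightarrow> dist c y = FK K z"
    "\<And>y. y \<in> Y \<Longrightarrow> 0 \<le> u y" "sum u Y = 1" "c = (\<Sum>y\<in>Y. u y *\<^sub>R y)"
    unfolding c_def by (rule char_repr[OF assms, where z=z]) blast
  have "(\<Sum>y\<in>Y. u y * (norm (y - z))\<^sup>2) = (\<Sum>y\<in>Y. u y * (norm (y - c))\<^sup>2) + (norm (c - z))\<^sup>2"
    by (rule var_identity[OF Y(1,5,6)])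
  moreover have "(\<Sum>y\<in>Y. u y * (norm (y - z))\<^sup>2) = (\<Sum>y\<in>Y. u y * (infdist z K)\<^sup>2)"
  proof (rule sum.cong[OF refl])
    fix y assume "y \<in> Y"
    hence "dist z y = infdist z K" using Y(2) by (auto simp: Theta_alt)
    thus "u y * (norm (y - z))\<^sup>2 = u y * (infdist z K)\<^sup>2" by (simp add: dist_norm norm_minus_commute)
  qed
  moreover have "(\<Sum>y\<in>Y. u y * (norm (y - c))\<^sup>2) = (\<Sum>y\<in>Y. u y * (FK K z)\<^sup>2)"
  proof (rule sum.cong[OF refl])
    fix y assume "y \<in> Y"
    hence "dist c y = FK K z" by (rule Y(3))
    thus "u y * (norm (y - c))\<^sup>2 = u y * (FK K z)\<^sup>2" by (simp add: dist_norm norm_minus_commute)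
  qed
  ultimately show ?thesis using wavg_const[OF Y(5)] by (simp add: c_def norm_minus_commute)
qed

lemma semiconcave:
  fixes K :: "'a::euclidean_space set"
  assumes "closed K" "K \<noteq> {}"
  shows "(infdist w K)\<^sup>2 \<le> (infdist z K)\<^sup>2 + 2 * inner (w - z) (z - enc_center (ThetaK K z)) + (norm (w - z))\<^sup>2"
proof -
  define c where "c = enc_center (ThetaK K z)"
  obtain Y u where Y: "finite Y" "Y \<subseteq> ThetaK K z" "\<And>y. y \<in> Y \<Longrightarrow> dist c y = FK K z"
    "\<And>y. y \<in> Y \<Longrightarrow> 0 \<le> u y" "sum u Y = 1" "c = (\<Sum>y\<in>Y. u y *\<^sub>R y)"
    unfolding c_def by (rule char_repr[OF assms, where z=z]) blast
  have "(infdist w K)\<^sup>2 \<le> (\<Sum>y\<in>Y. u y * (norm (y - w))\<^sup>2)"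
  proof (rule wavg_ge[OF _ Y(4,5)])
    fix y assume "y \<in> Y"
    hence "y \<in> K" using Y(2) by (auto simp: Theta_alt)
    hence "infdist w K \<le> norm (y - w)" using infdist_le[of y K w] by (simp add: dist_norm norm_minus_commute)
    thus "(infdist w K)\<^sup>2 \<le> (norm (y - w))\<^sup>2" by (rule power_mono[OF _ infdist_nonneg])
  qed
  also have "\<dots> = (\<Sum>y\<in>Y. u y * (norm (y - c))\<^sup>2) + (norm (c - w))\<^sup>2"
    by (rule var_identity[OF Y(1,5,6)])
  also have "(\<Sum>y\<in>Y. u y * (norm (y - c))\<^sup>2) = (FK K z)\<^sup>2"
  proof -
    have "(\<Sum>y\<in>Y. u y * (norm (y - c))\<^sup>2) = (\<Sum>y\<in>Y. u y * (FK K z)\<^sup>2)"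
    proof (rule sum.cong[OF refl])
      fix y assume "y \<in> Y"
      hence "dist c y = FK K z" by (rule Y(3))
      thus "u y * (norm (y - c))\<^sup>2 = u y * (FK K z)\<^sup>2" by (simp add: dist_norm norm_minus_commute)
    qed
    thus ?thesis using wavg_const[OF Y(5)] by simp
  qed
  also have "(norm (c - w))\<^sup>2 = (norm (z - c))\<^sup>2 + 2 * inner (w - z) (z - c) + (norm (w - z))\<^sup>2"
  proof -
    have "w - c = (z - c) + (w - z)" by simp
    hence "(norm (w - c))\<^sup>2 = (norm (z - c))\<^sup>2 + 2 * inner (z - c) (w - z) + (norm (w - z))\<^sup>2"
      using norm_add_sq[of "z - c" "w - z"] by simp
    thus ?thesis by (simp add: norm_minus_commute inner_commute)
  qed
  finally show ?thesis using pythag[OF assms, of z] by (simp add: c_def)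
qed

lemma claimA:
  fixes K :: "'a::euclidean_space set"
  assumes "closed K" "K \<noteq> {}" "\<rho> > 0" "\<rho> \<le> 2 * norm (z - enc_center (ThetaK K z))"
    "w \<in> cball z \<rho>" and wmax: "\<And>w'. w' \<in> cball z \<rho> \<Longrightarrow> infdist w' K \<le> infdist w K"
  shows "FK K z \<le> FK K w"
proof -
  define c where "c = enc_center (ThetaK K z)"
  define g where "g = norm (z - c)"
  define R0 where "R0 = infdist z K"
  define Rw where "Rw = infdist w K"
  define r where "r = norm (w - z)"
  have r0: "0 \<le> r" by (simp add: r_def)
  have rr: "r \<le> 2 * g" using assms(4,5) by (simp add: r_def g_def c_def dist_norm norm_minus_commute)
  obtain yh s where yh: "yh \<in> convex hull ThetaK K w" "s \<ge> 0" "w - yh = s *\<^sub>R (w - z)"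
    using lagrange[OF assms(1,2,3,5) wmax] by blast
  obtain Y u where Y: "finite Y" "Y \<subseteq> ThetaK K w" "\<And>y. y \<in> Y \<Longrightarrow> 0 \<le> u y" "sum u Y = 1"
    "yh = (\<Sum>y\<in>Y. u y *\<^sub>R y)"
    using hull_repr[OF yh(1)] by blast
  define V where "V = (\<Sum>y\<in>Y. u y * (norm (y - yh))\<^sup>2)"
  have a: "(\<Sum>y\<in>Y. u y * (norm (y - w))\<^sup>2) = Rw\<^sup>2"
  proof -
    have "(\<Sum>y\<in>Y. u y * (norm (y - w))\<^sup>2) = (\<Sum>y\<in>Y. u y * Rw\<^sup>2)"
    proof (rule sum.cong[OF refl])
      fix y assume "y \<in> Y"
      hence "dist w y = Rw" using Y(2) by (auto simp: Theta_alt Rw_def)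
      thus "u y * (norm (y - w))\<^sup>2 = u y * Rw\<^sup>2" by (simp add: dist_norm norm_minus_commute)
    qed
    thus ?thesis using wavg_const[OF Y(4)] by simp
  qed
  have b: "(\<Sum>y\<in>Y. u y * (norm (y - w))\<^sup>2) = V + (norm (yh - w))\<^sup>2"
    unfolding V_def by (rule var_identity[OF Y(1,4,5)])
  have c: "(\<Sum>y\<in>Y. u y * (norm (y - z))\<^sup>2) = V + (norm (yh - z))\<^sup>2"
    unfolding V_def by (rule var_identity[OF Y(1,4,5)])
  have d: "R0\<^sup>2 \<le> (\<Sum>y\<in>Y. u y * (norm (y - z))\<^sup>2)"
  proof (rule wavg_ge[OF _ Y(3,4)])
    fix y assume "y \<in> Y"
    hence "y \<in> K" using Y(2) by (auto simp: Theta_alt)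
    hence "R0 \<le> norm (y - z)" using infdist_le[of y K z] by (simp add: R0_def dist_norm norm_minus_commute)
    thus "R0\<^sup>2 \<le> (norm (y - z))\<^sup>2" by (rule power_mono) (simp add: R0_def infdist_nonneg)
  qed
  have nyw: "norm (yh - w) = s * r"
  proof -
    have "yh - w = - (s *\<^sub>R (w - z))" using yh(3) by (simp add: algebra_simps)
    thus ?thesis using yh(2) by (simp add: r_def)
  qed
  have nyz: "(norm (yh - z))\<^sup>2 = (1 - s)\<^sup>2 * r\<^sup>2"
  proof -
    have "yh - z = (1 - s) *\<^sub>R (w - z)"
    proof -
      have "yh = w - s *\<^sub>R (w - z)" using yh(3) by (simp add: algebra_simps)
      thus ?thesis by (simp add: algebra_simps)
    qed
    thus ?thesis by (simp add: r_def power_mult_distrib)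
  qed
  have e: "R0\<^sup>2 \<le> Rw\<^sup>2 - 2 * (s * r) * r + r\<^sup>2"
  proof -
    have "R0\<^sup>2 \<le> V + (1 - s)\<^sup>2 * r\<^sup>2" using c d nyz by simp
    moreover have "V = Rw\<^sup>2 - (s * r)\<^sup>2" using a b nyw by simp
    ultimately show ?thesis by (simp add: power2_eq_square algebra_simps)
  qed
  have f: "V \<le> (FK K w)\<^sup>2"
    unfolding V_def FK_def
    by (rule enc_var[OF Theta_facts(3)[OF assms(1,2)] Y(1,2,3,4,5)])
  have Vq: "V = Rw\<^sup>2 - (s * r)\<^sup>2" using a b nyw by simp
  have gsemi: "Rw\<^sup>2 \<le> R0\<^sup>2 + 2 * g * r + r\<^sup>2"
  proof -
    have "Rw\<^sup>2 \<le> R0\<^sup>2 + 2 * inner (w - z) (z - c) + (norm (w - z))\<^sup>2"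
      using semiconcave[OF assms(1,2), of w z] by (simp add: Rw_def R0_def c_def)
    moreover have "inner (w - z) (z - c) \<le> r * g"
      unfolding r_def g_def by (rule norm_cauchy_schwarz)
    ultimately show ?thesis by (simp add: r_def algebra_simps)
  qed
  have h: "R0\<^sup>2 \<le> Rw\<^sup>2"
  proof -
    have "R0 \<le> Rw" using wmax[of z] assms(3) by (simp add: R0_def Rw_def)
    thus ?thesis by (rule power_mono) (simp add: R0_def infdist_nonneg)
  qed
  have i: "R0\<^sup>2 = g\<^sup>2 + (FK K z)\<^sup>2" using pythag[OF assms(1,2), of z] by (simp add: R0_def g_def c_def)
  have q: "(s * r)\<^sup>2 \<le> (Rw\<^sup>2 - R0\<^sup>2) + g\<^sup>2"
  proof (cases "r = 0")
    case True
    thus ?thesis using h by simp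
  next
    case False
    hence "0 < r" using r0 by simp
    show ?thesis
    proof (rule alg_claimA)
      show "2 * (s * r) * r \<le> Rw\<^sup>2 - R0\<^sup>2 + r\<^sup>2" using e by simp
      show "Rw\<^sup>2 - R0\<^sup>2 \<le> 2 * g * r + r\<^sup>2" using gsemi by simp
      show "0 \<le> Rw\<^sup>2 - R0\<^sup>2" using h by simp
      show "r \<le> 2 * g" by (rule rr)
      show "0 \<le> s * r" using yh(2) r0 by simp
      show "0 < r" by fact
    qed
  qed
  have "(FK K z)\<^sup>2 \<le> (FK K w)\<^sup>2" using f Vq q i by simp
  thus ?thesis by (rule power2_le_imp_le) (rule Theta_facts(5)[OF assms(1,2)])
qed

lemma inner_Theta:
  fixes K :: "'a::euclidean_space set"
  assumes "closed K" "K \<noteq> {}" "y \<in> ThetaK K z"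
  shows "inner (z - y) (z - enc_center (ThetaK K z)) \<ge> (norm (z - enc_center (ThetaK K z)))\<^sup>2"
proof -
  define c where "c = enc_center (ThetaK K z)"
  have yc: "dist c y \<le> FK K z" using Theta_facts(4)[OF assms(1,2), of z] assms(3) by (auto simp: c_def)
  have yz: "norm (z - y) = infdist z K" using assms(3) by (simp add: Theta_alt dist_norm)
  have h1: "(norm (y - c))\<^sup>2 = (norm (z - c))\<^sup>2 + 2 * inner (z - c) (y - z) + (norm (y - z))\<^sup>2"
    using norm_add_sq[of "z - c" "y - z"] by simp
  have h2: "inner (z - c) (y - z) = - inner (z - y) (z - c)"
    by (metis inner_commute inner_minus_left minus_diff_eq)
  have h3: "norm (y - z) = infdist z K" using yz by (simp add: norm_minus_commute)
  have E: "(norm (y - c))\<^sup>2 = (norm (z - c))\<^sup>2 - 2 * inner (z - y) (z - c) + (infdist z K)\<^sup>2"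
    using h1 unfolding h2 h3 by simp
  have "(norm (y - c))\<^sup>2 \<le> (FK K z)\<^sup>2"
    using yc by (simp add: dist_norm norm_minus_commute power_mono)
  moreover have "(infdist z K)\<^sup>2 = (norm (z - c))\<^sup>2 + (FK K z)\<^sup>2" using pythag[OF assms(1,2), of z] by (simp add: c_def)
  ultimately show ?thesis using E by (simp add: c_def)
qed

lemma step:
  fixes K :: "'a::euclidean_space set"
  assumes K: "closed K" "K \<noteq> {}" and al: "\<alpha> > 0" and Cp: "C > 0" and lm: "lammin > 0"
    and mt: "mt > 0" "mt \<le> 1"
    and Rm: "\<And>y. y \<notin> K \<Longrightarrow> infdist y K \<le> RM"
    and Cdef: "C = RM\<^sup>2 / (\<alpha> * lammin * mt\<^sup>2)"
    and z: "\<alpha> < infdist z K" "lammin \<le> FK (offset K \<alpha>) z" "FK (offset K \<alpha>) z < b"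
    and gb: "mt * infdist z K \<le> norm (z - enc_center (ThetaK K z))"
  shows "\<exists>w. min (FK (offset K \<alpha>) w) b > FK (offset K \<alpha>) z + dist z w / C"
proof -
  define L where "L = offset K \<alpha>"
  define R0 where "R0 = infdist z K"
  define c where "c = enc_center (ThetaK K z)"
  define n where "n = norm (z - c)"
  define F0 where "F0 = FK K z"
  define Fs where "Fs = FK L z"
  have R0a: "R0 > \<alpha>" using z(1) by (simp add: R0_def)
  have R0p: "R0 > 0" using R0a al by simp
  have zK: "z \<notin> K" using R0p by (auto simp: R0_def)
  have R0M: "R0 \<le> RM" using Rm[OF zK] by (simp add: R0_def)
  have Fs_eq: "Fs = ((R0 - \<alpha>) / R0) * F0"
    using offset_rel(2)[OF K al z(1)] by (simp add: Fs_def L_def R0_def F0_def)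
  have Fsl: "lammin \<le> Fs" "Fs < b" using z(2,3) by (simp_all add: Fs_def L_def)
  have F00: "0 \<le> F0" using Theta_facts(5)[OF K] by (simp add: F0_def)
  have F0gt: "F0 > lammin"
  proof -
    have q1: "(R0 - \<alpha>) / R0 < 1" using R0p al by simp
    have "0 < Fs" using Fsl lm by simp
    have "F0 \<noteq> 0"
    proof
      assume "F0 = 0" thus False using Fs_eq \<open>0 < Fs\<close> by simp
    qed
    hence "F0 > 0" using F00 by simp
    hence "((R0 - \<alpha>) / R0) * F0 < 1 * F0" by (rule mult_strict_right_mono[OF q1])
    hence "Fs < F0" using Fs_eq by simp
    thus ?thesis using Fsl by simp
  qed
  have ngb: "n \<ge> mt * R0" using gb by (simp add: n_def c_def R0_def)
  have np: "n > 0" using ngb mt R0p by (meson less_le_trans mult_pos_pos)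
  define m where "m = (R0 * lammin * mt\<^sup>2 / F0 + n) / 2"
  have F0p: "F0 > 0" using F0gt lm by simp
  have key1: "R0 * lammin * mt\<^sup>2 / F0 < n"
  proof -
    have "R0 * lammin * mt\<^sup>2 \<le> R0 * lammin * mt"
    proof -
      have "mt * mt \<le> mt * 1" by (rule mult_left_mono[OF mt(2)]) (use mt(1) in simp)
      hence "mt\<^sup>2 \<le> mt" by (simp add: power2_eq_square)
      moreover have "0 \<le> R0 * lammin" using R0p lm by simp
      ultimately have "R0 * lammin * mt\<^sup>2 \<le> R0 * lammin * mt" by (rule mult_left_mono)
      thus ?thesis .
    qed
    also have "\<dots> < R0 * F0 * mt" using F0gt R0p mt by simp
    also have "\<dots> = (mt * R0) * F0" by simp
    also have "\<dots> \<le> n * F0" by (rule mult_right_mono[OF ngb F00])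
    finally have "R0 * lammin * mt\<^sup>2 < n * F0" .
    thus ?thesis using F0p by (simp add: divide_less_eq)
  qed
  have m1: "m < n" and m2: "R0 * lammin * mt\<^sup>2 / F0 < m"
  proof -
    define X where "X = R0 * lammin * mt\<^sup>2 / F0"
    have "X < n" using key1 by (simp add: X_def)
    moreover have "m = (X + n) / 2" by (simp add: m_def X_def)
    ultimately show "m < n" "R0 * lammin * mt\<^sup>2 / F0 < m" by (simp_all add: X_def[symmetric])
  qed
  define e where "e = (1 / n) *\<^sub>R (z - c)"
  have ne: "norm e = 1" using np by (simp add: e_def n_def)
  have dirp: "inner (z - y) e > m" if "y \<in> ThetaK K z" for y
  proof -
    have "inner (z - y) (z - c) \<ge> n\<^sup>2" using inner_Theta[OF K that] by (simp add: c_def n_def)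
    hence "(1 / n) * (n * n) \<le> (1 / n) * inner (z - y) (z - c)"
      using np by (intro mult_left_mono) (auto simp: power2_eq_square)
    moreover have "inner (z - y) e = (1 / n) * inner (z - y) (z - c)" by (simp add: e_def)
    ultimately have "inner (z - y) e \<ge> n" using np by simp
    thus ?thesis using m1 by simp
  qed
  obtain \<rho>0 where r0: "\<rho>0 > 0" "\<And>t. 0 < t \<Longrightarrow> t \<le> \<rho>0 \<Longrightarrow> (infdist (z + t *\<^sub>R e) K)\<^sup>2 \<ge> R0\<^sup>2 + 2 * t * m"
    using dir_lemma[OF K, where z=z and v=e and m=m] dirp unfolding R0_def by blast
  define \<rho> where "\<rho> = min \<rho>0 (min (2 * n) (C * (b - Fs) / 2))"
  have rp: "\<rho> > 0" using r0(1) np Cp Fsl by (simp add: \<rho>_def)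
  have rn: "\<rho> \<le> 2 * norm (z - enc_center (ThetaK K z))" by (simp add: \<rho>_def n_def c_def)
  have rC: "\<rho> / C < b - Fs"
  proof -
    have "\<rho> \<le> C * (b - Fs) / 2" by (simp add: \<rho>_def)
    hence "\<rho> / C \<le> (C * (b - Fs) / 2) / C" by (rule divide_right_mono) (use Cp in simp)
    also have "(C * (b - Fs) / 2) / C = (b - Fs) / 2" using Cp by simp
    finally have "\<rho> / C \<le> (b - Fs) / 2" .
    moreover have "(b - Fs) / 2 < b - Fs" using Fsl(2) by simp
    ultimately show ?thesis by (rule le_less_trans)
  qed
  have "compact (cball z \<rho>)" "cball z \<rho> \<noteq> {}" using rp by auto
  moreover have "continuous_on (cball z \<rho>) (\<lambda>y. infdist y K)" by (intro continuous_intros)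
  ultimately obtain w where w: "w \<in> cball z \<rho>" "\<And>w'. w' \<in> cball z \<rho> \<Longrightarrow> infdist w' K \<le> infdist w K"
    using continuous_attains_sup[of "cball z \<rho>" "\<lambda>y. infdist y K"] by blast
  have FA: "F0 \<le> FK K w" using claimA[OF K rp rn w(1) w(2)] by (simp add: F0_def)
  define Rw where "Rw = infdist w K"
  have "z + \<rho> *\<^sub>R e \<in> cball z \<rho>" using ne rp by (simp add: dist_norm)
  hence "infdist (z + \<rho> *\<^sub>R e) K \<le> Rw" using w(2) by (simp add: Rw_def)
  moreover have "(infdist (z + \<rho> *\<^sub>R e) K)\<^sup>2 \<ge> R0\<^sup>2 + 2 * \<rho> * m" using r0(2)[OF rp] by (simp add: \<rho>_def)
  ultimately have Rw2: "Rw\<^sup>2 \<ge> R0\<^sup>2 + 2 * \<rho> * m"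
    using power_mono[OF \<open>infdist (z + \<rho> *\<^sub>R e) K \<le> Rw\<close> infdist_nonneg, of 2] by linarith
  have RwR0: "R0 \<le> Rw" using w(2)[of z] rp by (simp add: R0_def Rw_def)
  have Rwp: "Rw > \<alpha>" using RwR0 R0a by simp
  have wK: "w \<notin> K" using Rwp al by (auto simp: Rw_def)
  have RwM: "Rw \<le> RM" using Rm[OF wK] by (simp add: Rw_def)
  have FLw: "FK L w = ((Rw - \<alpha>) / Rw) * FK K w"
    using offset_rel(2)[OF K al, of w] Rwp by (simp add: L_def Rw_def)
  have "0 < R0 * lammin * mt\<^sup>2 / F0" using R0p lm mt F0p by (intro divide_pos_pos mult_pos_pos) auto
  hence mp: "m > 0" using m2 by linarith
  have diffR: "Rw - R0 \<ge> \<rho> * m / RM"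
  proof -
    have "(Rw - R0) * (Rw + R0) = Rw\<^sup>2 - R0\<^sup>2" by (simp add: power2_eq_square algebra_simps)
    hence "(Rw - R0) * (Rw + R0) \<ge> 2 * \<rho> * m" using Rw2 by simp
    moreover have "(Rw - R0) * (Rw + R0) \<le> (Rw - R0) * (2 * RM)"
      using RwR0 RwM R0M by (intro mult_left_mono) auto
    ultimately have "2 * \<rho> * m \<le> (Rw - R0) * (2 * RM)" by linarith
    moreover have "(Rw - R0) * (2 * RM) = 2 * ((Rw - R0) * RM)" by simp
    ultimately have "\<rho> * m \<le> (Rw - R0) * RM" by linarith
    moreover have "RM > 0" using R0M R0p by simp
    ultimately show ?thesis by (simp add: pos_divide_le_eq)
  qed
  have gain: "FK L w - Fs > \<rho> / C"
  proof -
    have "0 \<le> (Rw - \<alpha>) / Rw" using Rwp al by simp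
    hence "((Rw - \<alpha>) / Rw) * F0 \<le> ((Rw - \<alpha>) / Rw) * FK K w" by (rule mult_left_mono[OF FA])
    hence "FK L w \<ge> ((Rw - \<alpha>) / Rw) * F0" using FLw by simp
    moreover have "((Rw - \<alpha>) / Rw) * F0 - Fs = F0 * \<alpha> * (Rw - R0) / (R0 * Rw)"
      unfolding Fs_eq using R0p Rwp al by (simp add: field_simps)
    moreover have "F0 * \<alpha> * (Rw - R0) / (R0 * Rw) \<ge> F0 * \<alpha> * (\<rho> * m / RM) / (R0 * RM)"
    proof -
      have "F0 * \<alpha> * (\<rho> * m / RM) \<le> F0 * \<alpha> * (Rw - R0)"
        by (rule mult_left_mono[OF diffR]) (use F0p al in simp)
      moreover have "R0 * Rw \<le> R0 * RM" using RwM R0p by simp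
      moreover have "0 \<le> F0 * \<alpha> * (Rw - R0)" using F0p al RwR0 by simp
      moreover have "0 < R0 * Rw" using R0p Rwp al by simp
      ultimately show ?thesis using frac_le[of "F0 * \<alpha> * (Rw - R0)" "F0 * \<alpha> * (\<rho> * m / RM)" "R0 * Rw" "R0 * RM"] by simp
    qed
    moreover have "F0 * \<alpha> * (\<rho> * m / RM) / (R0 * RM) > \<rho> / C"
    proof -
      have Rp: "RM > 0" using R0M R0p by simp
      have "F0 * \<alpha> * (\<rho> * m / RM) / (R0 * RM) = \<rho> * (F0 * \<alpha> * m / (R0 * RM\<^sup>2))"
        using Rp R0p by (simp add: field_simps power2_eq_square)
      moreover have "F0 * \<alpha> * m / (R0 * RM\<^sup>2) > 1 / C"
      proof -
        have "1 / C = \<alpha> * lammin * mt\<^sup>2 / RM\<^sup>2" using Cdef by simp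
        moreover have "\<alpha> * lammin * mt\<^sup>2 / RM\<^sup>2 < F0 * \<alpha> * m / (R0 * RM\<^sup>2)"
        proof -
          have "R0 * lammin * mt\<^sup>2 < F0 * m" using m2 F0p by (simp add: divide_less_eq mult.commute)
          hence "\<alpha> * (R0 * lammin * mt\<^sup>2) < \<alpha> * (F0 * m)" using al by simp
          thus ?thesis using Rp R0p by (simp add: field_simps)
        qed
        ultimately show ?thesis by simp
      qed
      moreover have "\<rho> * (1 / C) < \<rho> * (F0 * \<alpha> * m / (R0 * RM\<^sup>2))"
        by (rule mult_strict_left_mono[OF \<open>F0 * \<alpha> * m / (R0 * RM\<^sup>2) > 1 / C\<close> rp])
      ultimately show ?thesis by simp
    qed
    ultimately show ?thesis by linarith
  qed
  have dzw: "dist z w \<le> \<rho>" using w(1) by simp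
  have "min (FK L w) b > Fs + dist z w / C"
  proof -
    have "dist z w / C \<le> \<rho> / C" using dzw Cp by (simp add: divide_right_mono)
    moreover have "Fs + \<rho> / C < b" using rC by simp
    ultimately show ?thesis using gain by simp
  qed
  thus ?thesis by (auto simp: L_def Fs_def)
qed

lemma tilde_le_mu: "tilde_mu \<mu> lam \<alpha> \<alpha>' K \<le> \<mu>"
  unfolding tilde_mu_def by auto

lemma grad_bound:
  fixes K :: "'a::euclidean_space set"
  assumes K: "closed K" "K \<noteq> {}" and al: "\<alpha> > 0" and lmx: "lammax > 0"
    and mu: "0 < \<mu>" "\<mu> \<le> 1" and rmu: "r_mu \<mu> \<alpha> K > ereal (\<alpha> + lammax)"
    and z: "\<alpha> < infdist z K" "FK (offset K \<alpha>) z < lammax"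
  shows "tilde_mu \<mu> lammax \<alpha> \<alpha> K * infdist z K \<le> norm (z - enc_center (ThetaK K z))"
proof -
  define R0 where "R0 = infdist z K"
  define c where "c = enc_center (ThetaK K z)"
  define n where "n = norm (z - c)"
  define mt where "mt = tilde_mu \<mu> lammax \<alpha> \<alpha> K"
  have R0p: "R0 > 0" using z(1) al by (simp add: R0_def)
  have n0: "0 \<le> n" by (simp add: n_def)
  have ng: "norm (gradK K z) = n / R0"
    using R0p by (simp add: gradK_def RK_def R0_def[symmetric] c_def n_def)
  have "mt \<le> n / R0"
  proof (cases "ereal R0 < r_mu \<mu> \<alpha> K")
    case True
    have chi: "\<mu> \<le> chiK K R0"
    proof (rule ccontr)
      assume "\<not> \<mu> \<le> chiK K R0"
      hence "chiK K R0 < \<mu>" by simp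
      hence "ereal R0 \<in> {ereal t | t. t > \<alpha> \<and> chiK K t < \<mu>}" using z(1) by (auto simp: R0_def)
      hence "r_mu \<mu> \<alpha> K \<le> ereal R0" unfolding r_mu_def by (rule Inf_lower)
      thus False using True by simp
    qed
    have "chiK K R0 \<le> norm (gradK K z)"
    proof -
      have ne: "{x. RK K x = R0} \<noteq> {}" using R0_def by (auto simp: RK_def)
      have "chiK K R0 = Inf {norm (gradK K x) | x. RK K x = R0}"
        unfolding chiK_def by (rule if_not_P[OF ne])
      also have "\<dots> \<le> norm (gradK K z)"
      proof (rule cInf_lower)
        show "norm (gradK K z) \<in> {norm (gradK K x) | x. RK K x = R0}"
          unfolding R0_def RK_def by blast
        show "bdd_below {norm (gradK K x) | x. RK K x = R0}"
          by (rule bdd_belowI[of _ 0]) auto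
      qed
      finally show ?thesis .
    qed
    thus ?thesis using chi tilde_le_mu[of \<mu> lammax \<alpha> \<alpha> K] ng by (simp add: mt_def)
  next
    case False
    hence ge: "r_mu \<mu> \<alpha> K \<le> ereal R0" by simp
    have ninf: "r_mu \<mu> \<alpha> K \<noteq> \<infinity>" using ge by auto
    have nminf: "r_mu \<mu> \<alpha> K \<noteq> -\<infinity>" using rmu by auto
    obtain r where r: "r_mu \<mu> \<alpha> K = ereal r" using ninf nminf by (cases "r_mu \<mu> \<alpha> K") auto
    have r1: "r > \<alpha> + lammax" using rmu r by simp
    have r2: "r \<le> R0" using ge r by simp
    define k where "k = lammax / (r - \<alpha>)"
    have mtk: "mt \<le> sqrt (1 - k\<^sup>2)" using ninf r by (simp add: mt_def tilde_mu_def k_def)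
    define F0 where "F0 = FK K z"
    have F00: "0 \<le> F0" using Theta_facts(5)[OF K] by (simp add: F0_def)
    have FL: "FK (offset K \<alpha>) z = ((R0 - \<alpha>) / R0) * F0"
      using offset_rel(2)[OF K al z(1)] by (simp add: R0_def F0_def)
    have p1: "F0 / R0 < k"
    proof -
      have "((R0 - \<alpha>) / R0) * F0 < lammax" using FL z(2) by simp
      moreover have "((R0 - \<alpha>) / R0) * F0 = (F0 / R0) * (R0 - \<alpha>)" by simp
      ultimately have "(F0 / R0) * (R0 - \<alpha>) < lammax" by (simp add: mult.commute)
      moreover have "R0 - \<alpha> > 0" using r1 r2 lmx by simp
      ultimately have "F0 / R0 < lammax / (R0 - \<alpha>)" by (simp add: pos_less_divide_eq)
      also have "lammax / (R0 - \<alpha>) \<le> lammax / (r - \<alpha>)"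
        using r1 r2 lmx by (intro divide_left_mono) auto
      finally show ?thesis by (simp add: k_def)
    qed
    have p0: "0 \<le> F0 / R0" using F00 R0p by simp
    have "(F0 / R0)\<^sup>2 \<le> k\<^sup>2" by (rule power_mono) (use p1 p0 in auto)
    moreover have "R0\<^sup>2 = n\<^sup>2 + F0\<^sup>2" using pythag[OF K, of z] by (simp add: R0_def n_def c_def F0_def)
    ultimately have "1 - k\<^sup>2 \<le> (n / R0)\<^sup>2"
    proof -
      assume A: "(F0 / R0)\<^sup>2 \<le> k\<^sup>2" and B: "R0\<^sup>2 = n\<^sup>2 + F0\<^sup>2"
      have "(F0 / R0)\<^sup>2 + (n / R0)\<^sup>2 = (F0\<^sup>2 + n\<^sup>2) / R0\<^sup>2" by (simp add: power_divide add_divide_distrib)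
      also have "F0\<^sup>2 + n\<^sup>2 = R0\<^sup>2" using B by simp
      also have "R0\<^sup>2 / R0\<^sup>2 = 1" using R0p by simp
      finally show ?thesis using A by linarith
    qed
    hence "sqrt (1 - k\<^sup>2) \<le> sqrt ((n / R0)\<^sup>2)" by (rule real_sqrt_le_mono)
    also have "\<dots> = n / R0" using n0 R0p by simp
    finally show ?thesis using mtk by simp
  qed
  hence "mt * R0 \<le> n" using R0p by (simp add: pos_le_divide_eq)
  thus ?thesis by (simp add: mt_def R0_def n_def c_def)
qed

lemma Rmax_bound:
  fixes K :: "'a::euclidean_space set"
  assumes "bounded (- K)" "K \<noteq> {}" "y \<notin> K"
  shows "infdist y K \<le> Rmax K"
proof -
  obtain B where B: "\<forall>x\<in>- K. norm x \<le> B" using assms(1) bounded_iff by blast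
  obtain k0 where k0: "k0 \<in> K" using assms(2) by blast
  have "bdd_above (RK K ` (- K))"
  proof (rule bdd_aboveI)
    fix t assume "t \<in> RK K ` (- K)"
    then obtain x where x: "x \<in> - K" "t = infdist x K" by (auto simp: RK_def)
    have "infdist x K \<le> dist x k0" by (rule infdist_le[OF k0])
    also have "\<dots> \<le> norm x + norm k0" by (simp add: dist_norm norm_triangle_ineq4)
    also have "\<dots> \<le> B + norm k0" using B x(1) by simp
    finally show "t \<le> B + norm k0" using x by simp
  qed
  moreover have "infdist y K \<in> RK K ` (- K)" using assms(3) by (auto simp: RK_def)
  ultimately show ?thesis unfolding Rmax_def by (rule cSup_upper[rotated])
qed

lemma main_claim:
  fixes K :: "'a::euclidean_space set"
  assumes K: "closed K" "bounded (- K)" and al: "\<alpha> > 0" and lmx: "lammax > 0"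
    and mu: "0 < \<mu>" "\<mu> \<le> 1" and rmu: "r_mu \<mu> \<alpha> K > ereal (\<alpha> + lammax)"
    and tmu: "tilde_mu \<mu> lammax \<alpha> \<alpha> K > 0" and lm: "0 < lammin" "lammin \<le> lammax"
    and ab: "lammin \<le> a" "a < b" "b \<le> lammax" and x: "x \<in> axl a \<alpha> K"
  shows "\<exists>z\<in>axl b \<alpha> K. dist x z \<le> (Rmax K)\<^sup>2 / (\<alpha> * lammin * (tilde_mu \<mu> lammax \<alpha> \<alpha> K)\<^sup>2) * (b - a)"
proof -
  have Kne: "K \<noteq> {}"
  proof
    assume "K = {}" thus False using K(2) by simp
  qed
  define L where "L = offset K \<alpha>"
  define mt where "mt = tilde_mu \<mu> lammax \<alpha> \<alpha> K"
  define RM where "RM = Rmax K"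
  define C where "C = RM\<^sup>2 / (\<alpha> * lammin * mt\<^sup>2)"
  have Lc: "closed L" by (simp add: L_def offset_closed)
  have Lne: "L \<noteq> {}" using offset_sub[of \<alpha> K] al Kne by (auto simp: L_def)
  have mt0: "mt > 0" using tmu by (simp add: mt_def)
  have mt1: "mt \<le> 1" using tilde_le_mu[of \<mu> lammax \<alpha> \<alpha> K] mu by (simp add: mt_def)
  have Rm: "\<And>y. y \<notin> K \<Longrightarrow> infdist y K \<le> RM" using Rmax_bound[OF K(2) Kne] by (simp add: RM_def)
  have FLx: "a \<le> FK L x" using x by (simp add: axl_def L_def)
  have a0: "a > 0" using ab lm by simp
  have xL: "x \<notin> L"
  proof
    assume "x \<in> L" hence "FK L x = 0" by (rule FK_inside)
    thus False using FLx a0 by simp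
  qed
  have xa: "\<alpha> < infdist x K" using xL by (simp add: L_def offset_def)
  have xK: "x \<notin> K" using xa al by auto
  have RMp: "RM > 0" using Rm[OF xK] xa al by simp
  have Cp: "C > 0" unfolding C_def using RMp al lm mt0 by simp
  define M where "M = C * (b - a)"
  have M0: "M \<ge> 0" using Cp ab by (simp add: M_def)
  define \<phi> where "\<phi> = (\<lambda>z. min (FK L z) b - dist x z / C)"
  define X where "X = cball x M"
  have usc: "\<exists>d>0. \<forall>z'\<in>X. dist z' z < d \<longrightarrow> \<phi> z' < \<phi> z + e" if zX: "z \<in> X" and ep: "e > 0" for z e
  proof -
    obtain \<delta> where d: "\<delta> > 0" "\<forall>z'. dist z' z < \<delta> \<longrightarrow> FK L z' \<le> FK L z + e / 2"
      using FK_usc[OF Lc Lne, of "e / 2" z] ep by auto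
    define d' where "d' = min \<delta> (C * e / 4)"
    have d'p: "d' > 0" using d(1) Cp ep by (simp add: d'_def)
    have "\<forall>z'\<in>X. dist z' z < d' \<longrightarrow> \<phi> z' < \<phi> z + e"
    proof (intro ballI impI)
      fix z' assume "z' \<in> X" "dist z' z < d'"
      hence "FK L z' \<le> FK L z + e / 2" using d(2) by (simp add: d'_def)
      hence m: "min (FK L z') b \<le> min (FK L z) b + e / 2" using ep by (simp add: min_def)
      have "dist x z \<le> dist x z' + dist z' z" by (rule dist_triangle)
      hence "dist x z / C \<le> dist x z' / C + dist z' z / C" using Cp by (simp add: add_divide_distrib[symmetric] divide_right_mono)
      moreover have "dist z' z / C < e / 4"
      proof -
        have "dist z' z < C * e / 4" using \<open>dist z' z < d'\<close> by (simp add: d'_def)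
        thus ?thesis using Cp by (simp add: divide_less_eq mult.commute)
      qed
      ultimately show "\<phi> z' < \<phi> z + e" using m ep unfolding \<phi>_def by linarith
    qed
    thus ?thesis using d'p by blast
  qed
  have "compact X" "X \<noteq> {}" using M0 by (auto simp: X_def)
  then obtain zs where zs: "zs \<in> X" "\<And>z'. z' \<in> X \<Longrightarrow> \<phi> z' \<le> \<phi> zs"
    using usc_max[of X \<phi>] usc by blast
  have phix: "a \<le> \<phi> x" using FLx ab by (simp add: \<phi>_def)
  have xX: "x \<in> X" using M0 by (simp add: X_def)
  have glob: "\<phi> w \<le> \<phi> zs" for w
  proof (cases "w \<in> X")
    case True thus ?thesis by (rule zs(2))
  next
    case False
    hence "dist x w > M" by (simp add: X_def)
    hence "dist x w / C > M / C" using Cp by (simp add: divide_strict_right_mono)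
    moreover have "M / C = b - a" using Cp by (simp add: M_def)
    moreover have "min (FK L w) b \<le> b" by simp
    ultimately have "\<phi> w < a" by (simp add: \<phi>_def)
    thus ?thesis using phix zs(2)[OF xX] by simp
  qed
  show ?thesis
  proof (cases "FK L zs \<ge> b")
    case True
    hence "zs \<in> axl b \<alpha> K" by (simp add: axl_def L_def)
    moreover have "dist x zs \<le> M" using zs(1) by (simp add: X_def)
    ultimately show ?thesis by (auto simp: M_def C_def RM_def mt_def)
  next
    case False
    hence Fsb: "FK L zs < b" by simp
    have "a \<le> \<phi> zs" using phix zs(2)[OF xX] by simp
    hence "a \<le> FK L zs - dist x zs / C" using Fsb by (simp add: \<phi>_def)
    moreover have "0 \<le> dist x zs / C" using Cp by simp
    ultimately have Fsa: "lammin \<le> FK L zs" using ab by simp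
    have zsL: "zs \<notin> L"
    proof
      assume "zs \<in> L" hence "FK L zs = 0" by (rule FK_inside)
      thus False using Fsa lm by simp
    qed
    have zsa: "\<alpha> < infdist zs K" using zsL by (simp add: L_def offset_def)
    have gb: "mt * infdist zs K \<le> norm (zs - enc_center (ThetaK K zs))"
      using grad_bound[OF K(1) Kne al lmx mu rmu zsa] Fsb ab(3) by (simp add: L_def mt_def)
    obtain w where w: "min (FK L w) b > FK L zs + dist zs w / C"
      using step[OF K(1) Kne al Cp lm(1) mt0 mt1 Rm C_def zsa _ _ gb, of b] Fsa Fsb by (auto simp: L_def)
    have "dist x w \<le> dist x zs + dist zs w" by (rule dist_triangle)
    hence "dist x w / C \<le> dist x zs / C + dist zs w / C" using Cp by (simp add: add_divide_distrib[symmetric] divide_right_mono)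
    moreover have "\<phi> zs = FK L zs - dist x zs / C" using Fsb by (simp add: \<phi>_def)
    moreover have "\<phi> w = min (FK L w) b - dist x w / C" by (simp add: \<phi>_def)
    ultimately have "\<phi> w > \<phi> zs" using w by linarith
    thus ?thesis using glob[of w] by simp
  qed
qed

lemma dH_bound:
  fixes A B :: "'a::euclidean_space set"
  assumes "B \<subseteq> A" "\<And>x. x \<in> A \<Longrightarrow> \<exists>z\<in>B. dist x z \<le> D" "D \<ge> 0"
  shows "dH A B \<le> ereal D" "dH B A \<le> ereal D"
proof -
  have eq: "A = {} \<longleftrightarrow> B = {}"
  proof
    assume "A = {}" thus "B = {}" using assms(1) by auto
  next
    assume "B = {}" thus "A = {}" using assms(2) by auto
  qed
  have s1: "(SUP x\<in>A. ereal (infdist x B)) \<le> ereal D"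
  proof (rule SUP_least)
    fix x assume "x \<in> A"
    then obtain z where "z \<in> B" "dist x z \<le> D" using assms(2) by blast
    hence "infdist x B \<le> D" using infdist_le[of z B x] by simp
    thus "ereal (infdist x B) \<le> ereal D" by simp
  qed
  have s2: "(SUP y\<in>B. ereal (infdist y A)) \<le> ereal D"
  proof (rule SUP_least)
    fix y assume "y \<in> B"
    hence "y \<in> A" using assms(1) by blast
    thus "ereal (infdist y A) \<le> ereal D" using assms(3) by simp
  qed
  show "dH A B \<le> ereal D" using eq s1 s2 assms(3) by (auto simp: dH_def)
  show "dH B A \<le> ereal D" using eq s1 s2 assms(3) by (auto simp: dH_def)
qed

theorem lemma9p4:
  fixes K :: "'a::euclidean_space set"
    and \<alpha> lammax lammin \<mu> lam1 lam2 :: real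
  assumes "closed K" and "bounded (- K)"
    and "\<alpha> > 0" and "lammax > 0" and "0 < \<mu>" and "\<mu> \<le> 1"
    and "r_mu \<mu> \<alpha> K > ereal (\<alpha> + lammax)"
    and "tilde_mu \<mu> lammax \<alpha> \<alpha> K > 0"
    and "0 < lammin" and "lammin \<le> lammax"
    and "lam1 \<in> {lammin..lammax}" and "lam2 \<in> {lammin..lammax}"
  shows "dH (axl lam1 \<alpha> K) (axl lam2 \<alpha> K)
           \<le> ereal ((Rmax K)\<^sup>2 / (\<alpha> * lammin * (tilde_mu \<mu> lammax \<alpha> \<alpha> K)\<^sup>2) * \<bar>lam1 - lam2\<bar>)"
proof -
  define C where "C = (Rmax K)\<^sup>2 / (\<alpha> * lammin * (tilde_mu \<mu> lammax \<alpha> \<alpha> K)\<^sup>2)"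
  have C0: "C \<ge> 0" unfolding C_def using assms(3,9) by simp
  have gen: "\<forall>x\<in>axl a \<alpha> K. \<exists>z\<in>axl b \<alpha> K. dist x z \<le> C * (b - a)"
    if ab: "lammin \<le> a" "a \<le> b" "b \<le> lammax" for a b
  proof
    fix x assume x: "x \<in> axl a \<alpha> K"
    show "\<exists>z\<in>axl b \<alpha> K. dist x z \<le> C * (b - a)"
    proof (cases "a = b")
      case True thus ?thesis using x by (intro bexI[of _ x]) auto
    next
      case False
      hence "a < b" using ab by simp
      thus ?thesis using main_claim[OF assms(1-10) ab(1) _ ab(3) x] by (simp add: C_def)
    qed
  qed
  have sub: "axl b \<alpha> K \<subseteq> axl a \<alpha> K" if "a \<le> b" for a b
    using that by (auto simp: axl_def)
  show ?thesis
  proof (cases "lam1 \<le> lam2")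
    case True
    have "dH (axl lam1 \<alpha> K) (axl lam2 \<alpha> K) \<le> ereal (C * (lam2 - lam1))"
      using True assms(11,12) C0
      by (intro dH_bound(1)[OF sub[OF True]] gen[rule_format]) (auto intro: mult_nonneg_nonneg)
    thus ?thesis using True by (simp add: C_def)
  next
    case False
    hence F: "lam2 \<le> lam1" by simp
    have "dH (axl lam1 \<alpha> K) (axl lam2 \<alpha> K) \<le> ereal (C * (lam1 - lam2))"
      using F assms(11,12) C0
      by (intro dH_bound(2)[OF sub[OF F]] gen[rule_format]) (auto intro: mult_nonneg_nonneg)
    thus ?thesis using F by (simp add: C_def)
  qed
qed

end
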